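(* Let $H\neq0$ be a Hermitian matrix of order $n\ge2$. Let $(H^{(k)},k\ge0)$ be generated by the Jacobi-type process $H^{(0)}=H$, $H^{(k+1)}=F_k^*H^{(k)}F_k$, $k\ge0$, where each $F_k=(f^{(k)}_{rs})$ is an elementary plane matrix acting in the $(i(k),j(k))$ plane, $i(k)<j(k)$. Suppose: (A1) the pivot strategy is generalized serial, i.e. $(i(k),j(k))=I_{\mathcal{O}}(k)$ for all $k$, for some $\mathcal{O}\in\mathcal{C}_{sg}^{(n)}$; (A2) there is a sequence of unitary elementary plane matrices $(U_k,k\ge0)$ with $\lim_{k\to\infty}(F_k-U_k)=0$; (A3) $\liminf_{k\to\infty}|f^{(k)}_{i(k)i(k)}|>0$; (A4) the sequence $(H^{(k)},k\ge0)$ is bounded. Then the following are equivalent: (i) $\lim_{k\to\infty}|h^{(k+1)}_{i(k)j(k)}|=0$, where $H^{(k+1)}=(h^{(k+1)}_{rs})$; (ii) $\lim_{k\to\infty}S(H^{(k)})=0$.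
   Context: $S(X)=\|X-\mathrm{diag}(X)\|_F$. An elementary plane matrix is a nonsingular $n\times n$ matrix that differs from $I_n$ only in one $2\times2$ principal submatrix; it acts in the $(i,j)$ plane if that submatrix lies in rows and columns $i,j$. Let $\mathcal{P}_n=\{(r,s):1\le r<s\le n\}$, $N=n(n-1)/2$; an ordering is a sequence listing each element of $\mathcal{P}_n$ exactly once. For an ordering $\mathcal{O}=(i_0,j_0),\dots,(i_{N-1},j_{N-1})$, the cyclic strategy is $I_{\mathcal{O}}(k)=(i_{k\bmod N},j_{k\bmod N})$. Relations on orderings: an admissible transposition swaps two adjacent pairs with disjoint index sets; $\mathcal{O}\sim\mathcal{O}'$ if one is obtained from the other by finitely many admissible transpositions; $\mathcal{O}\stackrel{\mathsf{s}}{\sim}\mathcal{O}'$ if $\mathcal{O}=[\mathcal{O}_1,\mathcal{O}_2]$, $\mathcal{O}'=[\mathcal{O}_2,\mathcal{O}_1]$ (concatenation); $\mathcal{O}\stackrel{\mathsf{w}}{\sim}\mathcal{O}'$ if there is a chain $\mathcal{O}=\mathcal{O}_0,\dots,\mathcal{O}_r=\mathcal{O}'$ of orderings whose adjacent terms are $\sim$ or $\stackrel{\mathsf{s}}{\sim}$; the chain is in canonical form if these relations alternate between $\sim$ and $\stackrel{\mathsf{s}}{\sim}$. $\mathcal{O}\stackrel{\mathsf{p}}{\sim}\mathcal{O}'$ if for some permutation $\mathsf{q}$ of $\{1,\dots,n\}$, $\mathcal{O}'$ arises by replacing each pair $(i_k,j_k)$ by the pair with entries $\mathsf{q}(i_k),\mathsf{q}(j_k)$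 in increasing order. $\mathcal{C}_c^{(n)}$: orderings $(1,2),(\tau_3(1),3),(\tau_3(2),3),\dots,(\tau_n(1),n),\dots,(\tau_n(n-1),n)$, $\tau_j$ a permutation of $\{1,\dots,j-1\}$; $\mathcal{C}_r^{(n)}$: orderings $(n-1,n),(n-2,\tau_{n-2}(n-1)),(n-2,\tau_{n-2}(n)),\dots,(1,\tau_1(2)),\dots,(1,\tau_1(n))$, $\tau_i$ a permutation of $\{i+1,\dots,n\}$; $\overleftarrow{\mathcal{C}}_c^{(n)},\overleftarrow{\mathcal{C}}_r^{(n)}$ the sets of orderings whose reversed sequences lie in $\mathcal{C}_c^{(n)}$, $\mathcal{C}_r^{(n)}$; $\mathcal{C}_{sp}^{(n)}=\mathcal{C}_c^{(n)}\cup\overleftarrow{\mathcal{C}}_c^{(n)}\cup\mathcal{C}_r^{(n)}\cup\overleftarrow{\mathcal{C}}_r^{(n)}$. $\mathcal{C}_{sg}^{(n)}$ (generalized serial orderings) is the set of orderings $\mathcal{O}$ with $\mathcal{O}\stackrel{\mathsf{p}}{\sim}\mathcal{O}'\stackrel{\mathsf{w}}{\sim}\mathcal{O}''$ or $\mathcal{O}\stackrel{\mathsf{w}}{\sim}\mathcal{O}'\stackrel{\mathsf{p}}{\sim}\mathcal{O}''$ for some ordering $\mathcal{O}'$ and some $\mathcal{O}''\in\mathcal{C}_{sp}^{(n)}$, the weak equivalence given in canonical form. *)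

theory Defs
  imports "HOL-Analysis.Analysis" "HOL-Combinatorics.Permutations"
begin

text \<open>Matrices of order n are represented as functions nat => nat => complex;
  only the entries with indices in {1..n} are meaningful (1-based, as in the paper).\<close>

type_synonym cmat = "nat \<Rightarrow> nat \<Rightarrow> complex"

definition idm :: cmat where
  "idm r s = (if r = s then 1 else 0)"

definition mmult :: "nat \<Rightarrow> cmat \<Rightarrow> cmat \<Rightarrow> cmat" where
  "mmult n A B = (\<lambda>r s. \<Sum>t=1..n. A r t * B t s)"

definition adj :: "cmat \<Rightarrow> cmat" where
  "adj A = (\<lambda>r s. cnj (A s r))"

definition hermitian_mat :: "nat \<Rightarrow> cmat \<Rightarrow> bool" where
  "hermitian_mat n A \<longleftrightarrow> (\<forall>r\<in>{1..n}. \<forall>s\<in>{1..n}. A r s = cnj (A s r))"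

definition zero_mat :: "nat \<Rightarrow> cmat \<Rightarrow> bool" where
  "zero_mat n A \<longleftrightarrow> (\<forall>r\<in>{1..n}. \<forall>s\<in>{1..n}. A r s = 0)"

definition unitary_mat :: "nat \<Rightarrow> cmat \<Rightarrow> bool" where
  "unitary_mat n U \<longleftrightarrow> (\<forall>r\<in>{1..n}. \<forall>s\<in>{1..n}. mmult n (adj U) U r s = idm r s)"

definition nonsingular_mat :: "nat \<Rightarrow> cmat \<Rightarrow> bool" where
  "nonsingular_mat n A \<longleftrightarrow> (\<exists>B. \<forall>r\<in>{1..n}. \<forall>s\<in>{1..n}. mmult n A B r s = idm r s)"

definition off_norm :: "nat \<Rightarrow> cmat \<Rightarrow> real" where
  "off_norm n X = sqrt (\<Sum>r=1..n. \<Sum>s=1..n. if r = s then 0 else (cmod (X r s))\<^sup>2)"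

definition elem_plane :: "nat \<Rightarrow> nat \<Rightarrow> nat \<Rightarrow> cmat \<Rightarrow> bool" where
  "elem_plane n i j F \<longleftrightarrow> 1 \<le> i \<and> i < j \<and> j \<le> n \<and> nonsingular_mat n F \<and>
     (\<forall>r\<in>{1..n}. \<forall>s\<in>{1..n}. (r \<notin> {i,j} \<or> s \<notin> {i,j}) \<longrightarrow> F r s = idm r s)"

definition elem_plane_any :: "nat \<Rightarrow> cmat \<Rightarrow> bool" where
  "elem_plane_any n F \<longleftrightarrow> (\<exists>i j. elem_plane n i j F)"

definition pairs :: "nat \<Rightarrow> (nat \<times> nat) set" where
  "pairs n = {(r,s). 1 \<le> r \<and> r < s \<and> s \<le> n}"

definition is_ordering :: "nat \<Rightarrow> (nat \<times> nat) list \<Rightarrow> bool" where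
  "is_ordering n os \<longleftrightarrow> distinct os \<and> set os = pairs n"

definition cyclic_strategy :: "(nat \<times> nat) list \<Rightarrow> nat \<Rightarrow> nat \<times> nat" where
  "cyclic_strategy os k = os ! (k mod length os)"

definition adm_transp :: "(nat \<times> nat) list \<Rightarrow> (nat \<times> nat) list \<Rightarrow> bool" where
  "adm_transp os osA \<longleftrightarrow> (\<exists>t. Suc t < length os \<and>
     {fst (os ! t), snd (os ! t)} \<inter> {fst (os ! Suc t), snd (os ! Suc t)} = {} \<and>
     osA = os[t := os ! Suc t, Suc t := os ! t])"

definition equiv_ord :: "(nat \<times> nat) list \<Rightarrow> (nat \<times> nat) list \<Rightarrow> bool" where
  "equiv_ord = adm_transp\<^sup>*\<^sup>*"

definition shift_equiv :: "(nat \<times> nat) list \<Rightarrow> (nat \<times> nat) list \<Rightarrow> bool" where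
  "shift_equiv os osA \<longleftrightarrow> (\<exists>os1 os2. os = os1 @ os2 \<and> osA = os2 @ os1)"

definition weak_equiv :: "(nat \<times> nat) list \<Rightarrow> (nat \<times> nat) list \<Rightarrow> bool" where
  "weak_equiv = (\<lambda>os osA. equiv_ord os osA \<or> shift_equiv os osA)\<^sup>*\<^sup>*"

definition perm_equiv :: "nat \<Rightarrow> (nat \<times> nat) list \<Rightarrow> (nat \<times> nat) list \<Rightarrow> bool" where
  "perm_equiv n os osA \<longleftrightarrow> (\<exists>q. q permutes {1..n} \<and>
     osA = map (\<lambda>(i,j). (min (q i) (q j), max (q i) (q j))) os)"

definition col_cyclic :: "nat \<Rightarrow> (nat \<times> nat) list set" where
  "col_cyclic n = {os. \<exists>\<tau>. (\<forall>j. \<tau> j permutes {1..<j}) \<and>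
     os = concat (map (\<lambda>j. map (\<lambda>i. (\<tau> j i, j)) [1..<j]) [2..<Suc n])}"

definition row_cyclic :: "nat \<Rightarrow> (nat \<times> nat) list set" where
  "row_cyclic n = {os. \<exists>\<tau>. (\<forall>i. \<tau> i permutes {Suc i..n}) \<and>
     os = concat (map (\<lambda>i. map (\<lambda>j. (i, \<tau> i j)) [Suc i..<Suc n]) (rev [1..<n]))}"

definition serial_sp :: "nat \<Rightarrow> (nat \<times> nat) list set" where
  "serial_sp n = col_cyclic n \<union> {os. rev os \<in> col_cyclic n} \<union>
                 row_cyclic n \<union> {os. rev os \<in> row_cyclic n}"

definition gen_serial :: "nat \<Rightarrow> (nat \<times> nat) list set" where
  "gen_serial n = {os. is_ordering n os \<and>
     (\<exists>osA osB. is_ordering n osA \<and> osB \<in> serial_sp n \<and>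
        ((perm_equiv n os osA \<and> weak_equiv osA osB) \<or> (weak_equiv os osA \<and> perm_equiv n osA osB)))}"

end

theory Submission
  imports Defs
begin



definition cj :: "nat \<Rightarrow> cmat \<Rightarrow> cmat \<Rightarrow> cmat" where
  "cj n G X = mmult n (mmult n (adj G) X) G"

definition inpl :: "nat \<Rightarrow> nat \<Rightarrow> nat \<Rightarrow> cmat \<Rightarrow> bool" where
  "inpl n p q G \<longleftrightarrow> (\<forall>r\<in>{1..n}. \<forall>s\<in>{1..n}. (r \<notin> {p,q} \<or> s \<notin> {p,q}) \<longrightarrow> G r s = idm r s)"

definition AS :: "nat \<Rightarrow> nat \<Rightarrow> nat \<Rightarrow> nat set" where
  "AS p q r = (if r \<in> {p,q} then {p,q} else {r})"

definition eqm :: "nat \<Rightarrow> cmat \<Rightarrow> cmat \<Rightarrow> bool" where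
  "eqm n X Y \<longleftrightarrow> (\<forall>r\<in>{1..n}. \<forall>s\<in>{1..n}. X r s = Y r s)"

definition zdiag :: "nat \<Rightarrow> cmat \<Rightarrow> bool" where
  "zdiag n X \<longleftrightarrow> (\<forall>r\<in>{1..n}. X r r = 0)"

definition rot :: "nat \<Rightarrow> nat \<Rightarrow> nat \<Rightarrow> cmat \<Rightarrow> bool" where
  "rot n p q G \<longleftrightarrow> 1 \<le> p \<and> p < q \<and> q \<le> n \<and>
     (\<forall>r\<in>{1..n}. \<forall>s\<in>{1..n}. mmult n (adj G) G r s = idm r s \<and> mmult n G (adj G) r s = idm r s) \<and>
     inpl n p q G \<and> G p p \<noteq> 0 \<and> G q q \<noteq> 0"

lemma mmult_assoc: "mmult n (mmult n A B) C = mmult n A (mmult n B C)"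
  unfolding mmult_def
  apply (rule ext)+
  apply (simp add: sum_distrib_left sum_distrib_right mult.assoc)
  apply (rule sum.swap)
  done

lemma adj_mmult: "adj (mmult n A B) = mmult n (adj B) (adj A)"
  unfolding mmult_def adj_def by (auto simp: mult.commute intro!: ext)

lemma adj_adj[simp]: "adj (adj A) = A"
  unfolding adj_def by auto

lemma mmult_congR: "eqm n B B' \<Longrightarrow> s \<in> {1..n} \<Longrightarrow> mmult n A B r s = mmult n A B' r s"
  unfolding mmult_def eqm_def by (auto intro!: sum.cong)

lemma mmult_congL: "eqm n A A' \<Longrightarrow> r \<in> {1..n} \<Longrightarrow> mmult n A C r s = mmult n A' C r s"
  unfolding mmult_def eqm_def by (auto intro!: sum.cong)

lemma cj_cong: "eqm n X Y \<Longrightarrow> cj n G X = cj n G Y"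
proof (intro ext)
  fix r s assume e: "eqm n X Y"
  show "cj n G X r s = cj n G Y r s"
    unfolding cj_def mmult_def[of n "mmult n (adj G) X"] mmult_def[of n "mmult n (adj G) Y"]
    by (rule sum.cong, simp, subst mmult_congR[OF e], auto)
qed

lemma mmult_idmL: "(\<forall>r\<in>{1..n}. \<forall>t\<in>{1..n}. A r t = idm r t) \<Longrightarrow> r \<in> {1..n} \<Longrightarrow> mmult n A B r s = B r s"
proof -
  assume a: "\<forall>r\<in>{1..n}. \<forall>t\<in>{1..n}. A r t = idm r t" and r: "r \<in> {1..n}"
  have "mmult n A B r s = (\<Sum>t\<in>{1..n}. (if r = t then B t s else 0))"
    unfolding mmult_def by (rule sum.cong, simp, use a r in \<open>auto simp: idm_def\<close>)
  also have "\<dots> = B r s" using r by (simp add: sum.delta)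
  finally show ?thesis .
qed

lemma mmult_idmR: "(\<forall>t\<in>{1..n}. \<forall>s\<in>{1..n}. A t s = idm t s) \<Longrightarrow> s \<in> {1..n} \<Longrightarrow> mmult n B A r s = B r s"
proof -
  assume a: "\<forall>t\<in>{1..n}. \<forall>s\<in>{1..n}. A t s = idm t s" and s: "s \<in> {1..n}"
  have "mmult n B A r s = (\<Sum>t\<in>{1..n}. (if t = s then B r t else 0))"
    unfolding mmult_def by (rule sum.cong, simp, use a s in \<open>auto simp: idm_def\<close>)
  also have "\<dots> = B r s" using s by (simp add: sum.delta')
  finally show ?thesis .
qed

lemma cj_comp: "cj n A (cj n B Y) = cj n (mmult n B A) Y"
  unfolding cj_def adj_mmult mmult_assoc ..

lemma herm_term: "xab = cnj xba \<Longrightarrow> cnj ga * xab * gb = cnj (cnj gb * xba * ga)"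
  by (simp add: mult.commute mult.left_commute)

lemma cj_herm: "hermitian_mat n X \<Longrightarrow> hermitian_mat n (cj n G X)"
  unfolding hermitian_mat_def
proof (intro ballI)
  fix r s assume h: "\<forall>r\<in>{1..n}. \<forall>s\<in>{1..n}. X r s = cnj (X s r)" and rs: "r \<in> {1..n}" "s \<in> {1..n}"
  have e: "cj n G X a b = (\<Sum>u\<in>{1..n}. \<Sum>t\<in>{1..n}. cnj (G t a) * X t u * G u b)" for a b
    unfolding cj_def mmult_def adj_def by (simp add: sum_distrib_right)
  have "cnj (cj n G X s r) = (\<Sum>u\<in>{1..n}. \<Sum>t\<in>{1..n}. cnj (cnj (G t s) * X t u * G u r))"
    unfolding e by (simp only: cnj_sum)
  also have "\<dots> = (\<Sum>t\<in>{1..n}. \<Sum>u\<in>{1..n}. cnj (cnj (G t s) * X t u * G u r))"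
    by (rule sum.swap)
  also have "\<dots> = (\<Sum>t\<in>{1..n}. \<Sum>u\<in>{1..n}. cnj (G u r) * X u t * G t s)"
    by (rule sum.cong[OF refl], rule sum.cong[OF refl], rule sym, rule herm_term, use h in blast)
  also have "\<dots> = cj n G X r s" unfolding e ..
  finally show "cj n G X r s = cnj (cj n G X s r)" by simp
qed

lemma cj_inv: assumes "\<forall>r\<in>{1..n}. \<forall>s\<in>{1..n}. mmult n G (adj G) r s = idm r s"
  shows "eqm n (cj n (adj G) (cj n G X)) X"
  unfolding eqm_def cj_comp
proof (intro ballI)
  fix r s assume rs: "r \<in> {1..n}" "s \<in> {1..n}"
  have "cj n (mmult n G (adj G)) X r s = mmult n (mmult n (adj (mmult n G (adj G))) X) (mmult n G (adj G)) r s"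
    unfolding cj_def ..
  also have "\<dots> = mmult n (adj (mmult n G (adj G))) X r s"
    by (rule mmult_idmR[OF assms rs(2)])
  also have "\<dots> = X r s"
    apply (rule mmult_idmL[OF _ rs(1)])
    unfolding adj_mmult adj_adj using assms by (auto simp: idm_def)
  finally show "cj n (mmult n G (adj G)) X r s = X r s" .
qed

lemma cj_zero: "(\<forall>a\<in>{1..n}. \<forall>b\<in>{1..n}. X a b = 0) \<Longrightarrow> cj n G X r s = 0"
  unfolding cj_def mmult_def by simp




lemma AS_sub: "p \<in> {1..n} \<Longrightarrow> q \<in> {1..n} \<Longrightarrow> r \<in> {1..n} \<Longrightarrow> AS p q r \<subseteq> {1..n}"
  unfolding AS_def by auto

lemma multR_plane:
  assumes G: "inpl n p q G" and pq: "p \<in> {1..n}" "q \<in> {1..n}" and s: "s \<in> {1..n}"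
  shows "mmult n Y G r s = (\<Sum>b\<in>AS p q s. Y r b * G b s)"
  unfolding mmult_def
proof (rule sum.mono_neutral_right)
  show "finite {1..n}" by simp
  show "AS p q s \<subseteq> {1..n}" using AS_sub pq s .
  show "\<forall>i\<in>{1..n} - AS p q s. Y r i * G i s = 0"
    using G s unfolding inpl_def AS_def idm_def by (auto split: if_splits)
qed

lemma multL_plane:
  assumes G: "inpl n p q G" and pq: "p \<in> {1..n}" "q \<in> {1..n}" and r: "r \<in> {1..n}"
  shows "mmult n (adj G) Y r s = (\<Sum>a\<in>AS p q r. cnj (G a r) * Y a s)"
  unfolding mmult_def adj_def
proof (rule sum.mono_neutral_right)
  show "finite {1..n}" by simp
  show "AS p q r \<subseteq> {1..n}" using AS_sub pq r .
  show "\<forall>i\<in>{1..n} - AS p q r. cnj (G i r) * Y i s = 0"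
    using G r unfolding inpl_def AS_def idm_def by (auto split: if_splits)
qed

lemma cj_entry:
  assumes G: "inpl n p q G" and pq: "p \<in> {1..n}" "q \<in> {1..n}" and rs: "r \<in> {1..n}" "s \<in> {1..n}"
  shows "cj n G X r s = (\<Sum>b\<in>AS p q s. (\<Sum>a\<in>AS p q r. cnj (G a r) * X a b) * G b s)"
proof -
  have "cj n G X r s = (\<Sum>b\<in>AS p q s. mmult n (adj G) X r b * G b s)"
    unfolding cj_def by (rule multR_plane[OF G pq rs(2)])
  also have "\<dots> = (\<Sum>b\<in>AS p q s. (\<Sum>a\<in>AS p q r. cnj (G a r) * X a b) * G b s)"
    by (rule sum.cong[OF refl], subst multL_plane[OF G pq rs(1)], auto)
  finally show ?thesis .
qed

lemma inpl_diag: "inpl n p q G \<Longrightarrow> r \<in> {1..n} \<Longrightarrow> r \<notin> {p,q} \<Longrightarrow> G r r = 1"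
  unfolding inpl_def idm_def by auto

lemma cj_oo:
  assumes G: "inpl n p q G" and pq: "p \<in> {1..n}" "q \<in> {1..n}" and rs: "r \<in> {1..n}" "s \<in> {1..n}"
    and o: "r \<notin> {p,q}" "s \<notin> {p,q}"
  shows "cj n G X r s = X r s"
  unfolding cj_entry[OF G pq rs] using o inpl_diag[OF G rs(1) o(1)] inpl_diag[OF G rs(2) o(2)]
  by (simp add: AS_def)

lemma cj_oi:
  assumes G: "inpl n p q G" and pq: "p \<in> {1..n}" "q \<in> {1..n}" "p \<noteq> q" and rs: "r \<in> {1..n}" "s \<in> {1..n}"
    and o: "r \<notin> {p,q}" "s \<in> {p,q}"
  shows "cj n G X r s = X r p * G p s + X r q * G q s"
  unfolding cj_entry[OF G pq(1,2) rs] using o inpl_diag[OF G rs(1) o(1)] pq(3)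
  by (simp add: AS_def)

lemma cj_io:
  assumes G: "inpl n p q G" and pq: "p \<in> {1..n}" "q \<in> {1..n}" "p \<noteq> q" and rs: "r \<in> {1..n}" "s \<in> {1..n}"
    and o: "r \<in> {p,q}" "s \<notin> {p,q}"
  shows "cj n G X r s = cnj (G p r) * X p s + cnj (G q r) * X q s"
  unfolding cj_entry[OF G pq(1,2) rs] using o inpl_diag[OF G rs(2) o(2)] pq(3)
  by (simp add: AS_def)

lemma cj_ii:
  assumes G: "inpl n p q G" and pq: "p \<in> {1..n}" "q \<in> {1..n}" "p \<noteq> q" and rs: "r \<in> {1..n}" "s \<in> {1..n}"
    and o: "r \<in> {p,q}" "s \<in> {p,q}"
  shows "cj n G X r s = (cnj (G p r) * X p p + cnj (G q r) * X q p) * G p s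
                       + (cnj (G p r) * X p q + cnj (G q r) * X q q) * G q s"
  unfolding cj_entry[OF G pq(1,2) rs] using o pq(3)
  by (simp add: AS_def)

lemma cj_block_zero:
  assumes G: "inpl n p q G" and pq: "p \<in> {1..n}" "q \<in> {1..n}" "p \<noteq> q" and rs: "r \<in> {1..n}" "s \<in> {1..n}"
    and o: "r \<in> {p,q}" "s \<in> {p,q}"
    and z: "X p p = 0" "X q q = 0" "X p q = 0" "X q p = 0"
  shows "cj n G X r s = 0"
  unfolding cj_ii[OF G pq rs o] z by simp

lemma herm_zero: "hermitian_mat n X \<Longrightarrow> p \<in> {1..n} \<Longrightarrow> q \<in> {1..n} \<Longrightarrow> X p q = 0 \<Longrightarrow> X q p = 0"
  unfolding hermitian_mat_def by (metis complex_cnj_zero)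

lemma cj_zdiag:
  assumes G: "inpl n p q G" and pq: "p \<in> {1..n}" "q \<in> {1..n}" "p \<noteq> q"
    and h: "hermitian_mat n X" and z: "zdiag n X" and x: "X p q = 0"
  shows "zdiag n (cj n G X)"
  unfolding zdiag_def
proof
  fix r assume r: "r \<in> {1..n}"
  show "cj n G X r r = 0"
  proof (cases "r \<in> {p,q}")
    case True
    have "X p p = 0" "X q q = 0" using z pq by (auto simp: zdiag_def)
    then show ?thesis
      using cj_block_zero[OF G pq r r True True] x herm_zero[OF h pq(1,2) x] by blast
  next
    case False
    then show ?thesis using cj_oo[OF G pq(1,2) r r False False] z r by (simp add: zdiag_def)
  qed
qed

lemma rot_inpl: "rot n p q G \<Longrightarrow> inpl n p q G" unfolding rot_def by simp
lemma rot_range: "rot n p q G \<Longrightarrow> p \<in> {1..n} \<and> q \<in> {1..n} \<and> p \<noteq> q" unfolding rot_def by auto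
lemma rot_uu: "rot n p q G \<Longrightarrow> \<forall>r\<in>{1..n}. \<forall>s\<in>{1..n}. mmult n G (adj G) r s = idm r s" unfolding rot_def by auto
lemma rot_uu': "rot n p q G \<Longrightarrow> \<forall>r\<in>{1..n}. \<forall>s\<in>{1..n}. mmult n (adj G) G r s = idm r s" unfolding rot_def by auto




fun zp :: "nat \<Rightarrow> ((nat \<times> nat) \<times> cmat) list \<Rightarrow> cmat \<Rightarrow> bool" where
  "zp n [] X = True"
| "zp n (((p,q),G) # L) X = (X p q = 0 \<and> zp n L (cj n G X))"

fun run :: "nat \<Rightarrow> ((nat \<times> nat) \<times> cmat) list \<Rightarrow> cmat \<Rightarrow> cmat" where
  "run n [] X = X"
| "run n ((pq,G) # L) X = run n L (cj n G X)"

definition rots :: "nat \<Rightarrow> ((nat \<times> nat) \<times> cmat) list \<Rightarrow> bool" where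
  "rots n L \<longleftrightarrow> (\<forall>x\<in>set L. rot n (fst (fst x)) (snd (fst x)) (snd x))"

definition good :: "nat \<Rightarrow> (nat \<times> nat) list \<Rightarrow> bool" where
  "good n ps \<longleftrightarrow> (\<forall>L X. map fst L = ps \<longrightarrow> rots n L \<longrightarrow> hermitian_mat n X \<longrightarrow> zdiag n X
      \<longrightarrow> zp n L X \<longrightarrow> zero_mat n X)"

lemma rots_Cons[simp]: "rots n (((p,q),G) # L) \<longleftrightarrow> rot n p q G \<and> rots n L"
  unfolding rots_def by auto

lemma rots_append[simp]: "rots n (L1 @ L2) \<longleftrightarrow> rots n L1 \<and> rots n L2"
  unfolding rots_def by auto

lemma rots_Nil[simp]: "rots n []" unfolding rots_def by auto

lemma zp_append: "zp n (L1 @ L2) X \<longleftrightarrow> zp n L1 X \<and> zp n L2 (run n L1 X)"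
  by (induction L1 arbitrary: X) auto

lemma run_append: "run n (L1 @ L2) X = run n L2 (run n L1 X)"
  by (induction L1 arbitrary: X) auto

lemma zp_run_inv: "rots n L \<Longrightarrow> hermitian_mat n X \<Longrightarrow> zdiag n X \<Longrightarrow> zp n L X \<Longrightarrow>
   hermitian_mat n (run n L X) \<and> zdiag n (run n L X)"
proof (induction L arbitrary: X)
  case Nil then show ?case by simp
next
  case (Cons a L)
  obtain p q G where a: "a = ((p,q),G)" by (metis prod.collapse)
  have r: "rot n p q G" "rots n L" using Cons.prems(1) a by auto
  have x: "X p q = 0" "zp n L (cj n G X)" using Cons.prems(4) a by auto
  have "hermitian_mat n (cj n G X)" by (rule cj_herm[OF Cons.prems(2)])
  moreover have "zdiag n (cj n G X)"
    using cj_zdiag[OF rot_inpl[OF r(1)] _ _ _ Cons.prems(2,3) x(1)] rot_range[OF r(1)] by blast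
  ultimately show ?case using Cons.IH[OF r(2) _ _ x(2)] a by simp
qed

lemma cj_zero_inv: assumes "rot n p q G" "zero_mat n (cj n G X)" shows "zero_mat n X"
proof -
  have e: "eqm n (cj n (adj G) (cj n G X)) X" by (rule cj_inv[OF rot_uu[OF assms(1)]])
  have "cj n (adj G) (cj n G X) r s = 0" for r s
    by (rule cj_zero, use assms(2) in \<open>simp add: zero_mat_def\<close>)
  then show ?thesis using e unfolding zero_mat_def eqm_def by auto
qed

lemma run_zero_inv: "rots n L \<Longrightarrow> zero_mat n (run n L X) \<Longrightarrow> zero_mat n X"
proof (induction L arbitrary: X)
  case Nil then show ?case by simp
next
  case (Cons a L)
  obtain p q G where a: "a = ((p,q),G)" by (metis prod.collapse)
  have r: "rot n p q G" "rots n L" using Cons.prems(1) a by auto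
  have "zero_mat n (cj n G X)" using Cons.IH[OF r(2)] Cons.prems(2) a by simp
  then show ?case using cj_zero_inv[OF r(1)] by blast
qed

lemma eqm_sym: "eqm n X Y \<Longrightarrow> eqm n Y X" unfolding eqm_def by auto

lemma zp_cong: "rots n L \<Longrightarrow> eqm n X Y \<Longrightarrow> zp n L X = zp n L Y"
proof (cases L)
  case Nil then show ?thesis by simp
next
  case (Cons a L')
  obtain p q G where a: "a = ((p,q),G)" by (metis prod.collapse)
  assume "rots n L" "eqm n X Y"
  then show ?thesis using Cons a cj_cong[of n X Y G] rot_range[of n p q G] unfolding eqm_def by auto
qed

lemma run_cong: assumes "eqm n X Y" shows "eqm n (run n L X) (run n L Y)"
proof (cases L)
  case Nil then show ?thesis using assms by simp
next
  case (Cons a L')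
  obtain pq G where a: "a = (pq,G)" by (metis prod.collapse)
  then show ?thesis using Cons a cj_cong[OF assms, of G] by (auto simp: eqm_def)
qed

lemma zero_mat_cong: "eqm n X Y \<Longrightarrow> zero_mat n X = zero_mat n Y"
  unfolding eqm_def zero_mat_def by auto

lemma good_append_right: "good n ps \<Longrightarrow> good n (ps @ rs)"
  unfolding good_def
proof (intro allI impI)
  fix L X assume g: "\<forall>L X. map fst L = ps \<longrightarrow> rots n L \<longrightarrow> hermitian_mat n X \<longrightarrow> zdiag n X \<longrightarrow> zp n L X \<longrightarrow> zero_mat n X"
    and m: "map fst L = ps @ rs" and r: "rots n L" and h: "hermitian_mat n X" and z: "zdiag n X" and zz: "zp n L X"
  obtain L1 L2 where L: "L = L1 @ L2" "map fst L1 = ps" using m by (metis map_eq_append_conv)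
  show "zero_mat n X" using g[rule_format, of L1 X] L r h z zz by (simp add: zp_append)
qed

lemma good_append_left: "good n ps \<Longrightarrow> good n (qs @ ps)"
  unfolding good_def
proof (intro allI impI)
  fix L X assume g: "\<forall>L X. map fst L = ps \<longrightarrow> rots n L \<longrightarrow> hermitian_mat n X \<longrightarrow> zdiag n X \<longrightarrow> zp n L X \<longrightarrow> zero_mat n X"
    and m: "map fst L = qs @ ps" and r: "rots n L" and h: "hermitian_mat n X" and z: "zdiag n X" and zz: "zp n L X"
  obtain L1 L2 where L: "L = L1 @ L2" "map fst L1 = qs" "map fst L2 = ps" using m by (metis map_eq_append_conv)
  have zz': "zp n L1 X" "zp n L2 (run n L1 X)" using zz L by (auto simp: zp_append)
  have r': "rots n L1" "rots n L2" using r L by auto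
  have hz: "hermitian_mat n (run n L1 X) \<and> zdiag n (run n L1 X)" by (rule zp_run_inv[OF r'(1) h z zz'(1)])
  have "zero_mat n (run n L1 X)" using g[rule_format, OF L(3) r'(2)] hz zz'(2) by blast
  then show "zero_mat n X" by (rule run_zero_inv[OF r'(1)])
qed




definition disj :: "nat \<times> nat \<Rightarrow> nat \<times> nat \<Rightarrow> bool" where
  "disj a b \<longleftrightarrow> {fst a, snd a} \<inter> {fst b, snd b} = {}"

lemma cj_congG:
  assumes "eqm n M M'" shows "eqm n (cj n M Y) (cj n M' Y)"
  unfolding eqm_def cj_def
proof (intro ballI)
  fix r s assume rs: "r \<in> {1..n}" "s \<in> {1..n}"
  have a: "eqm n (adj M) (adj M')" using assms unfolding eqm_def adj_def by auto
  have "mmult n (mmult n (adj M) Y) M r s = mmult n (mmult n (adj M) Y) M' r s"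
    by (rule mmult_congR[OF assms rs(2)])
  also have "\<dots> = mmult n (mmult n (adj M') Y) M' r s"
    unfolding mmult_def[of n "mmult n (adj M) Y"] mmult_def[of n "mmult n (adj M') Y"]
    by (rule sum.cong[OF refl], subst mmult_congL[OF a rs(1)], rule refl)
  finally show "mmult n (mmult n (adj M) Y) M r s = mmult n (mmult n (adj M') Y) M' r s" .
qed

lemma prod_plane:
  assumes Ga: "inpl n a1 a2 Ga" and Gb: "inpl n b1 b2 Gb"
    and ra: "a1 \<in> {1..n}" "a2 \<in> {1..n}" "a1 \<noteq> a2" and rb: "b1 \<in> {1..n}" "b2 \<in> {1..n}"
    and d: "{a1,a2} \<inter> {b1,b2} = {}" and rs: "r \<in> {1..n}" "s \<in> {1..n}"
  shows "mmult n Gb Ga r s = (if s \<in> {a1,a2} then Ga r s else Gb r s)"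
proof (cases "s \<in> {a1,a2}")
  case True
  have "mmult n Gb Ga r s = (\<Sum>t\<in>{a1,a2}. Gb r t * Ga t s)"
    using multR_plane[OF Ga ra(1,2) rs(2)] True by (simp add: AS_def)
  also have "\<dots> = (\<Sum>t\<in>{a1,a2}. idm r t * Ga t s)"
    by (rule sum.cong[OF refl], use Gb d rs ra in \<open>auto simp: inpl_def\<close>)
  also have "\<dots> = Ga r s"
    using ra(3) Ga rs True unfolding idm_def inpl_def by auto
  finally show ?thesis using True by simp
next
  case False
  have "mmult n Gb Ga r s = Gb r s * Ga s s"
    using multR_plane[OF Ga ra(1,2) rs(2)] False by (simp add: AS_def)
  then show ?thesis using False inpl_diag[OF Ga rs(2)] by simp
qed

lemma plane_commute:
  assumes a: "rot n a1 a2 Ga" and b: "rot n b1 b2 Gb" and d: "{a1,a2} \<inter> {b1,b2} = {}"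
  shows "eqm n (mmult n Gb Ga) (mmult n Ga Gb)"
  unfolding eqm_def
proof (intro ballI)
  fix r s assume rs: "r \<in> {1..n}" "s \<in> {1..n}"
  have A: "inpl n a1 a2 Ga" "a1 \<in> {1..n}" "a2 \<in> {1..n}" "a1 \<noteq> a2"
    using rot_inpl[OF a] rot_range[OF a] by auto
  have B: "inpl n b1 b2 Gb" "b1 \<in> {1..n}" "b2 \<in> {1..n}" "b1 \<noteq> b2"
    using rot_inpl[OF b] rot_range[OF b] by auto
  have d': "{b1,b2} \<inter> {a1,a2} = {}" using d by auto
  show "mmult n Gb Ga r s = mmult n Ga Gb r s"
    unfolding prod_plane[OF A(1) B(1) A(2-4) B(2,3) d rs] prod_plane[OF B(1) A(1) B(2-4) A(2,3) d' rs]
    using A(1) B(1) rs d unfolding inpl_def by auto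
qed

lemma swap_zp:
  assumes a: "rot n a1 a2 Ga" and b: "rot n b1 b2 Gb" and d: "{a1,a2} \<inter> {b1,b2} = {}"
    and z: "zp n [((b1,b2),Gb),((a1,a2),Ga)] Y"
  shows "zp n [((a1,a2),Ga),((b1,b2),Gb)] Y"
proof -
  have A: "inpl n a1 a2 Ga" "a1 \<in> {1..n}" "a2 \<in> {1..n}" "a1 \<noteq> a2"
    using rot_inpl[OF a] rot_range[OF a] by auto
  have B: "inpl n b1 b2 Gb" "b1 \<in> {1..n}" "b2 \<in> {1..n}" "b1 \<noteq> b2"
    using rot_inpl[OF b] rot_range[OF b] by auto
  have z1: "Y b1 b2 = 0" "cj n Gb Y a1 a2 = 0" using z by auto
  have "cj n Gb Y a1 a2 = Y a1 a2" by (rule cj_oo[OF B(1-3) A(2,3)], use d in auto)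
  moreover have "cj n Ga Y b1 b2 = Y b1 b2" by (rule cj_oo[OF A(1-3) B(2,3)], use d in auto)
  ultimately show ?thesis using z1 by simp
qed

lemma swap_run:
  assumes a: "rot n a1 a2 Ga" and b: "rot n b1 b2 Gb" and d: "{a1,a2} \<inter> {b1,b2} = {}"
  shows "eqm n (run n [((a1,a2),Ga),((b1,b2),Gb)] Y) (run n [((b1,b2),Gb),((a1,a2),Ga)] Y)"
  using cj_congG[OF plane_commute[OF b a], of Y] d by (simp add: cj_comp Int_commute)

lemma good_swap:
  assumes g: "good n (xs @ [a,b] @ ys)" and d: "disj a b"
  shows "good n (xs @ [b,a] @ ys)"
  unfolding good_def
proof (intro allI impI)
  fix L X assume m: "map fst L = xs @ [b,a] @ ys" and r: "rots n L" and h: "hermitian_mat n X"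
    and z: "zdiag n X" and zz: "zp n L X"
  obtain L1 L3 where L: "L = L1 @ L3" "xs = map fst L1" "[b,a] @ ys = map fst L3"
    using map_eq_append_conv[THEN iffD1, OF m] by blast
  define L2 where "L2 = take 2 L3"
  define L4 where "L4 = drop 2 L3"
  have L': "L3 = L2 @ L4" "map fst L2 = [b,a]" "map fst L4 = ys"
    unfolding L2_def L4_def
      apply simp
     apply (simp only: take_map[symmetric] L(3)[symmetric], simp)
    apply (simp only: drop_map[symmetric] L(3)[symmetric], simp)
    done
  have "\<exists>Gb Ga. L2 = [(b,Gb),(a,Ga)]"
    using L'(2) by (cases L2; cases "tl L2"; auto)
  then obtain Gb Ga where L2: "L2 = [(b,Gb),(a,Ga)]" by blast
  obtain a1 a2 b1 b2 where ab: "a = (a1,a2)" "b = (b1,b2)" by (metis prod.collapse)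
  have "rots n (L1 @ [((b1,b2),Gb),((a1,a2),Ga)] @ L4)" using r L L' L2 ab by simp
  then have rr: "rots n L1" "rot n a1 a2 Ga" "rot n b1 b2 Gb" "rots n L4"
    by simp_all
  have d': "{a1,a2} \<inter> {b1,b2} = {}" using d ab by (simp add: disj_def)
  define Y where "Y = run n L1 X"
  have zs: "zp n L1 X" "zp n [((b1,b2),Gb),((a1,a2),Ga)] Y"
    "zp n L4 (run n [((b1,b2),Gb),((a1,a2),Ga)] Y)"
    using zz unfolding L L' L2 ab zp_append Y_def by simp_all
  let ?L = "L1 @ [((a1,a2),Ga),((b1,b2),Gb)] @ L4"
  have "zp n ?L X"
    unfolding zp_append run_append Y_def[symmetric]
    using zs swap_zp[OF rr(2,3) d' zs(2)] zp_cong[OF rr(4) swap_run[OF rr(2,3) d', of Y]] by simp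
  moreover have "map fst ?L = xs @ [a,b] @ ys" using L L' ab by simp
  moreover have "rots n ?L" using rr by simp
  ultimately show "zero_mat n X" using g h z unfolding good_def by blast
qed

definition sw :: "(nat \<times> nat) list \<Rightarrow> (nat \<times> nat) list \<Rightarrow> bool" where
  "sw x y \<longleftrightarrow> (\<exists>xs a b ys. x = xs @ [a,b] @ ys \<and> y = xs @ [b,a] @ ys \<and> disj a b)"

lemma sw_good: "sw x y \<Longrightarrow> good n x \<Longrightarrow> good n y"
  unfolding sw_def using good_swap by blast

lemma sw_sym: "sw x y \<Longrightarrow> sw y x"
  unfolding sw_def disj_def by blast

lemma sw_ctx: "sw x y \<Longrightarrow> sw (zs @ x @ ws) (zs @ y @ ws)"
  unfolding sw_def by (metis append.assoc)

lemma sws_good: "sw\<^sup>*\<^sup>* x y \<Longrightarrow> good n x \<Longrightarrow> good n y"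
  by (induction rule: rtranclp_induct) (auto intro: sw_good)

lemma sws_ctx: "sw\<^sup>*\<^sup>* x y \<Longrightarrow> sw\<^sup>*\<^sup>* (zs @ x @ ws) (zs @ y @ ws)"
proof (induction rule: rtranclp_induct)
  case base then show ?case by simp
next
  case (step y z) then show ?case by (meson rtranclp.rtrancl_into_rtrancl sw_ctx)
qed

definition rep :: "nat \<Rightarrow> (nat \<times> nat) list \<Rightarrow> (nat \<times> nat) list" where
  "rep m x = concat (replicate m x)"

lemma rep_Suc: "rep (Suc m) x = x @ rep m x" unfolding rep_def by simp
lemma rep_0: "rep 0 x = []" unfolding rep_def by simp

lemma sws_rep: "sw\<^sup>*\<^sup>* x y \<Longrightarrow> sw\<^sup>*\<^sup>* (rep m x) (rep m y)"
proof (induction m)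
  case 0 then show ?case by (simp add: rep_0)
next
  case (Suc m)
  have 1: "sw\<^sup>*\<^sup>* (x @ rep m x) (y @ rep m x)" using sws_ctx[OF Suc.prems, of "[]" "rep m x"] by simp
  have 2: "sw\<^sup>*\<^sup>* (y @ rep m x) (y @ rep m y)" using sws_ctx[OF Suc.IH[OF Suc.prems], of y "[]"] by simp
  show ?case unfolding rep_Suc using 1 2 by simp
qed

lemma adm_transp_sw: assumes "adm_transp os osA" shows "sw osA os"
proof -
  obtain t where t: "Suc t < length os"
    "{fst (os ! t), snd (os ! t)} \<inter> {fst (os ! Suc t), snd (os ! Suc t)} = {}"
    "osA = os[t := os ! Suc t, Suc t := os ! t]"
    using assms unfolding adm_transp_def by blast
  define xs where "xs = take t os"
  define ys where "ys = drop (Suc (Suc t)) os"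
  have e1: "os = xs @ [os ! t, os ! Suc t] @ ys"
    unfolding xs_def ys_def using t(1)
    by (metis Cons_nth_drop_Suc Suc_lessD append_Cons append_Nil append_take_drop_id)
  have e2: "osA = xs @ [os ! Suc t, os ! t] @ ys"
    unfolding t(3) by (subst e1, simp add: xs_def list_update_append, use t(1) in \<open>simp add: min_def\<close>)
  show ?thesis unfolding sw_def disj_def using e1 e2 t(2) by blast
qed

lemma equiv_ord_sw: "equiv_ord os osA \<Longrightarrow> sw\<^sup>*\<^sup>* osA os"
  unfolding equiv_ord_def
proof (induction rule: rtranclp_induct)
  case base then show ?case by simp
next
  case (step y z)
  then show ?case using adm_transp_sw by (meson converse_rtranclp_into_rtranclp)
qed




definition adjL :: "((nat \<times> nat) \<times> cmat) list \<Rightarrow> ((nat \<times> nat) \<times> cmat) list" where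
  "adjL L = rev (map (\<lambda>(pq,G). (pq, adj G)) L)"

lemma rot_adj: assumes "rot n p q G" shows "rot n p q (adj G)"
proof -
  have "inpl n p q (adj G)" using rot_inpl[OF assms] unfolding inpl_def adj_def idm_def
    by (metis complex_cnj_one complex_cnj_zero)
  then show ?thesis using assms unfolding rot_def by (simp add: adj_def)
qed

lemma rev_zp: "rots n L \<Longrightarrow> hermitian_mat n X \<Longrightarrow> zdiag n X \<Longrightarrow> zp n L X \<Longrightarrow>
  zp n (adjL L) (run n L X) \<and> eqm n (run n (adjL L) (run n L X)) X"
proof (induction L arbitrary: X)
  case Nil then show ?case by (simp add: adjL_def eqm_def)
next
  case (Cons a L0)
  obtain p q G where a: "a = ((p,q),G)" by (metis prod.collapse)
  have r: "rot n p q G" "rots n L0" using Cons.prems(1) a by auto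
  have pq: "inpl n p q G" "p \<in> {1..n}" "q \<in> {1..n}" "p \<noteq> q" using rot_inpl[OF r(1)] rot_range[OF r(1)] by auto
  have x: "X p q = 0" "zp n L0 (cj n G X)" using Cons.prems(4) a by auto
  define X1 where "X1 = cj n G X"
  have h1: "hermitian_mat n X1" unfolding X1_def by (rule cj_herm[OF Cons.prems(2)])
  have z1: "zdiag n X1" unfolding X1_def by (rule cj_zdiag[OF pq Cons.prems(2,3) x(1)])
  have IH: "zp n (adjL L0) (run n L0 X1)" "eqm n (run n (adjL L0) (run n L0 X1)) X1"
    using Cons.IH[OF r(2) h1 z1] x(2) unfolding X1_def by auto
  have aL: "adjL (a # L0) = adjL L0 @ [((p,q), adj G)]" unfolding adjL_def a by simp
  have rl: "run n (a # L0) X = run n L0 X1" unfolding a X1_def by simp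
  have X1pq: "X1 p q = 0"
  proof -
    have "X p p = 0" "X q q = 0" using Cons.prems(3) pq by (auto simp: zdiag_def)
    then show ?thesis unfolding X1_def
      using cj_block_zero[OF pq pq(2,3) _ _ _ _ x(1) herm_zero[OF Cons.prems(2) pq(2,3) x(1)]] by simp
  qed
  have "run n (adjL L0) (run n L0 X1) p q = 0" using IH(2) X1pq pq unfolding eqm_def by auto
  then have zpa: "zp n (adjL (a # L0)) (run n (a # L0) X)"
    unfolding aL rl zp_append using IH(1) by simp
  have "run n (adjL (a # L0)) (run n (a # L0) X) = cj n (adj G) (run n (adjL L0) (run n L0 X1))"
    unfolding aL rl run_append by simp
  also have "\<dots> = cj n (adj G) X1" by (rule cj_cong[OF IH(2)])
  finally have "eqm n (run n (adjL (a # L0)) (run n (a # L0) X)) X"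
    using cj_inv[OF rot_uu[OF r(1)], of X] unfolding X1_def by simp
  then show ?case using zpa by simp
qed

lemma good_rev: assumes g: "good n ps" shows "good n (rev ps)"
  unfolding good_def
proof (intro allI impI)
  fix L X assume m: "map fst L = rev ps" and r: "rots n L" and h: "hermitian_mat n X"
    and z: "zdiag n X" and zz: "zp n L X"
  have m': "map fst (adjL L) = ps" unfolding adjL_def using m by (simp add: rev_map[symmetric] case_prod_beta comp_def)
  have r': "rots n (adjL L)" using r unfolding rots_def adjL_def by (auto simp: rot_adj case_prod_beta)
  have hz: "hermitian_mat n (run n L X) \<and> zdiag n (run n L X)" by (rule zp_run_inv[OF r h z zz])
  have "zp n (adjL L) (run n L X)" using rev_zp[OF r h z zz] by simp
  then have "zero_mat n (run n L X)" using g m' r' hz unfolding good_def by blast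
  then show "zero_mat n X" by (rule run_zero_inv[OF r])
qed

definition Rq :: "(nat \<Rightarrow> nat) \<Rightarrow> cmat \<Rightarrow> cmat" where
  "Rq q A = (\<lambda>r s. A (inv q r) (inv q s))"

definition fq :: "(nat \<Rightarrow> nat) \<Rightarrow> nat \<times> nat \<Rightarrow> nat \<times> nat" where
  "fq q = (\<lambda>(i,j). (min (q i) (q j), max (q i) (q j)))"

lemma mmult_Rq: assumes q: "q permutes {1..n}" shows "mmult n (Rq q A) (Rq q B) = Rq q (mmult n A B)"
proof (intro ext)
  fix r s
  have "mmult n A B (inv q r) (inv q s) = (\<Sum>u\<in>{1..n}. A (inv q r) u * B u (inv q s))"
    unfolding mmult_def ..
  also have "\<dots> = (\<Sum>t\<in>{1..n}. A (inv q r) (inv q t) * B (inv q t) (inv q s))"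
    by (subst sum.permute[OF permutes_inv[OF q]], simp add: comp_def)
  finally show "mmult n (Rq q A) (Rq q B) r s = Rq q (mmult n A B) r s"
    unfolding Rq_def mmult_def by simp
qed

lemma adj_Rq: "adj (Rq q A) = Rq q (adj A)" unfolding adj_def Rq_def by simp

lemma cj_Rq: "q permutes {1..n} \<Longrightarrow> cj n (Rq q G) (Rq q X) = Rq q (cj n G X)"
  unfolding cj_def adj_Rq by (simp add: mmult_Rq)

lemma inv_in: "q permutes {1..n} \<Longrightarrow> r \<in> {1..n} \<Longrightarrow> inv q r \<in> {1..n}"
  by (metis permutes_in_image permutes_inv)

lemma herm_Rq: "q permutes {1..n} \<Longrightarrow> hermitian_mat n X \<Longrightarrow> hermitian_mat n (Rq q X)"
  unfolding hermitian_mat_def Rq_def using inv_in by blast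

lemma zdiag_Rq: "q permutes {1..n} \<Longrightarrow> zdiag n X \<Longrightarrow> zdiag n (Rq q X)"
  unfolding zdiag_def Rq_def using inv_in by blast

lemma zero_Rq: assumes q: "q permutes {1..n}" and z: "zero_mat n (Rq q X)" shows "zero_mat n X"
  unfolding zero_mat_def
proof (intro ballI)
  fix a b assume ab: "a \<in> {1..n}" "b \<in> {1..n}"
  have "q a \<in> {1..n}" "q b \<in> {1..n}" using ab q by (metis permutes_in_image)+
  then have "Rq q X (q a) (q b) = 0" using z unfolding zero_mat_def by blast
  then show "X a b = 0" unfolding Rq_def using permutes_inverses(2)[OF q] by simp
qed

lemma idm_inv: "q permutes S \<Longrightarrow> idm (inv q r) (inv q s) = idm r s"
  unfolding idm_def by (metis permutes_inverses(1))

lemma rot_Rq: assumes q: "q permutes {1..n}" and G: "rot n a b G"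
  shows "rot n (fst (fq q (a,b))) (snd (fq q (a,b))) (Rq q G)"
proof -
  have ab: "a \<in> {1..n}" "b \<in> {1..n}" "a \<noteq> b" using rot_range[OF G] by auto
  have qab: "q a \<in> {1..n}" "q b \<in> {1..n}" "q a \<noteq> q b"
    using ab q by (metis permutes_in_image, metis permutes_in_image, metis permutes_inverses(2))
  have iq: "inv q (q a) = a" "inv q (q b) = b" using permutes_inverses(2)[OF q] by auto
  have u: "\<forall>r\<in>{1..n}. \<forall>s\<in>{1..n}. mmult n (adj (Rq q G)) (Rq q G) r s = idm r s \<and>
          mmult n (Rq q G) (adj (Rq q G)) r s = idm r s"
    unfolding adj_Rq mmult_Rq[OF q] using G inv_in[OF q] idm_inv[OF q] unfolding rot_def Rq_def by metis
  have ip: "inpl n (q a) (q b) (Rq q G)"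
    unfolding inpl_def Rq_def
  proof (intro ballI impI)
    fix r s assume rs: "r \<in> {1..n}" "s \<in> {1..n}" and o: "r \<notin> {q a, q b} \<or> s \<notin> {q a, q b}"
    have k: "x \<in> {q a, q b}" if "inv q x \<in> {a,b}" for x
      using that permutes_inverses(1)[OF q, of x] by auto
    have o': "inv q r \<notin> {a, b} \<or> inv q s \<notin> {a, b}" using o k by blast
    show "G (inv q r) (inv q s) = idm r s"
      using rot_inpl[OF G] o' inv_in[OF q rs(1)] inv_in[OF q rs(2)] idm_inv[OF q] unfolding inpl_def by metis
  qed
  have d: "Rq q G (q a) (q a) \<noteq> 0" "Rq q G (q b) (q b) \<noteq> 0"
    unfolding Rq_def iq using G unfolding rot_def by auto
  have ip': "inpl n (min (q a) (q b)) (max (q a) (q b)) (Rq q G)"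
    using ip unfolding inpl_def by (simp add: min_def max_def insert_commute)
  show ?thesis unfolding fq_def using qab u ip' d unfolding rot_def
    by (auto simp: min_def max_def)
qed

lemma zp_Rq: "q permutes {1..n} \<Longrightarrow> rots n L \<Longrightarrow> hermitian_mat n X \<Longrightarrow> zp n L X \<Longrightarrow>
  zp n (map (\<lambda>(pq,G). (fq q pq, Rq q G)) L) (Rq q X)"
proof (induction L arbitrary: X)
  case Nil then show ?case by simp
next
  case (Cons x L0)
  obtain a b G where x: "x = ((a,b),G)" by (metis prod.collapse)
  have r: "rot n a b G" "rots n L0" using Cons.prems(2) x by auto
  have ab: "a \<in> {1..n}" "b \<in> {1..n}" using rot_range[OF r(1)] by auto
  have z: "X a b = 0" "zp n L0 (cj n G X)" using Cons.prems(4) x by auto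
  have z2: "X b a = 0" by (rule herm_zero[OF Cons.prems(3) ab z(1)])
  have iq: "inv q (q a) = a" "inv q (q b) = b" using permutes_inverses(2)[OF Cons.prems(1)] by auto
  have hd: "Rq q X (fst (fq q (a,b))) (snd (fq q (a,b))) = 0"
    unfolding fq_def Rq_def using z(1) z2 iq by (auto simp: min_def max_def)
  have tl: "zp n (map (\<lambda>(pq,G). (fq q pq, Rq q G)) L0) (Rq q (cj n G X))"
    by (rule Cons.IH[OF Cons.prems(1) r(2) cj_herm[OF Cons.prems(3)] z(2)])
  obtain c d where cd: "fq q (a,b) = (c,d)" by (metis prod.collapse)
  show ?case using hd tl cj_Rq[OF Cons.prems(1), of G X] by (simp add: x cd)
qed

lemma good_perm: assumes q: "q permutes {1..n}" and g: "good n (map (fq q) ps)" shows "good n ps"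
  unfolding good_def
proof (intro allI impI)
  fix L X assume m: "map fst L = ps" and r: "rots n L" and h: "hermitian_mat n X"
    and z: "zdiag n X" and zz: "zp n L X"
  let ?L = "map (\<lambda>(pq,G). (fq q pq, Rq q G)) L"
  have m': "map fst ?L = map (fq q) ps" using m by (auto simp: case_prod_beta)
  have r': "rots n ?L" using r rot_Rq[OF q] unfolding rots_def by (auto simp: case_prod_beta)
  have "zero_mat n (Rq q X)"
    using g m' r' herm_Rq[OF q h] zdiag_Rq[OF q z] zp_Rq[OF q r h zz] unfolding good_def by blast
  then show "zero_mat n X" by (rule zero_Rq[OF q])
qed

lemma rep_shift: "rep (Suc m) (O2 @ O1) = O2 @ rep m (O1 @ O2) @ O1"
  by (induction m) (simp_all add: rep_Suc rep_0)

definition Pg :: "nat \<Rightarrow> (nat \<times> nat) list \<Rightarrow> bool" where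
  "Pg n x \<longleftrightarrow> (\<exists>m. good n (rep m x))"

lemma Pg_shift: "Pg n (O2 @ O1) \<Longrightarrow> Pg n (O1 @ O2)"
  unfolding Pg_def
proof (elim exE)
  fix m assume "good n (rep m (O2 @ O1))"
  then have "good n (O1 @ rep m (O2 @ O1) @ O2)" by (intro good_append_left good_append_right)
  then show "\<exists>m. good n (rep m (O1 @ O2))" using rep_shift[of m O1 O2] by metis
qed

lemma Pg_equiv: "equiv_ord x y \<Longrightarrow> Pg n y \<Longrightarrow> Pg n x"
  unfolding Pg_def using equiv_ord_sw sws_rep sws_good by blast

lemma Pg_weak: "weak_equiv x y \<Longrightarrow> Pg n y \<Longrightarrow> Pg n x"
  unfolding weak_equiv_def
proof (induction rule: converse_rtranclp_induct)
  case base then show ?case .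
next
  case (step a b)
  have "Pg n b" using step.IH step.prems .
  then show ?case using step.hyps(1) Pg_equiv Pg_shift unfolding shift_equiv_def by blast
qed

lemma rep_map: "rep m (map f x) = map f (rep m x)"
  unfolding rep_def by (simp add: map_concat)

lemma Pg_perm: "perm_equiv n x y \<Longrightarrow> Pg n y \<Longrightarrow> Pg n x"
  unfolding perm_equiv_def Pg_def
proof (elim exE conjE)
  fix q m assume q: "q permutes {1..n}" and y: "y = map (\<lambda>(i, j). (min (q i) (q j), max (q i) (q j))) x"
    and g: "good n (rep m y)"
  have "good n (map (fq q) (rep m x))" using g unfolding y rep_map fq_def .
  then show "\<exists>m. good n (rep m x)" using good_perm[OF q] by blast
qed




lemma sum_outer:
  fixes c w v y z g :: "nat \<Rightarrow> complex"
  assumes "finite A" "finite B"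
  shows "(\<Sum>b\<in>B. (\<Sum>a\<in>A. c a * (w a * y b + v a * z b)) * g b)
       = (\<Sum>a\<in>A. c a * w a) * (\<Sum>b\<in>B. y b * g b) + (\<Sum>a\<in>A. c a * v a) * (\<Sum>b\<in>B. z b * g b)"
proof -
  have "(\<Sum>b\<in>B. (\<Sum>a\<in>A. c a * (w a * y b + v a * z b)) * g b)
     = (\<Sum>b\<in>B. (\<Sum>a\<in>A. c a * w a) * (y b * g b) + (\<Sum>a\<in>A. c a * v a) * (z b * g b))"
    by (rule sum.cong[OF refl]) (simp add: sum_distrib_left sum_distrib_right distrib_left distrib_right sum.distrib mult_ac)
  also have "\<dots> = (\<Sum>a\<in>A. c a * w a) * (\<Sum>b\<in>B. y b * g b) + (\<Sum>a\<in>A. c a * v a) * (\<Sum>b\<in>B. z b * g b)"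
    by (simp add: sum.distrib sum_distrib_left)
  finally show ?thesis .
qed

definition pr :: "nat \<Rightarrow> nat \<Rightarrow> nat \<times> nat" where
  "pr c p = (min c p, max c p)"

lemma cj_outer:
  assumes G: "inpl n p q G" and pq: "p \<in> {1..n}" "q \<in> {1..n}" "p \<noteq> q"
    and S: "S \<subseteq> {1..n}" "p \<in> S" "q \<in> S"
    and X: "\<forall>a\<in>S. \<forall>b\<in>S. X a b = w a * cnj (v b) + v a * cnj (w b)"
    and rs: "r \<in> S" "s \<in> S"
  shows "cj n G X r s = (\<Sum>a\<in>AS p q r. cnj (G a r) * w a) * cnj (\<Sum>a\<in>AS p q s. cnj (G a s) * v a)
                       + (\<Sum>a\<in>AS p q r. cnj (G a r) * v a) * cnj (\<Sum>a\<in>AS p q s. cnj (G a s) * w a)"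
proof -
  have rs': "r \<in> {1..n}" "s \<in> {1..n}" using rs S by auto
  have sub: "AS p q x \<subseteq> S" if "x \<in> S" for x using that S unfolding AS_def by auto
  have fin: "finite (AS p q x)" for x unfolding AS_def by auto
  have "cj n G X r s = (\<Sum>b\<in>AS p q s. (\<Sum>a\<in>AS p q r. cnj (G a r) * X a b) * G b s)"
    by (rule cj_entry[OF G pq(1,2) rs'])
  also have "\<dots> = (\<Sum>b\<in>AS p q s. (\<Sum>a\<in>AS p q r. cnj (G a r) * (w a * cnj (v b) + v a * cnj (w b))) * G b s)"
    by (intro sum.cong refl arg_cong2[where f="(*)"]) (use X sub rs in blast)
  also have "\<dots> = (\<Sum>a\<in>AS p q r. cnj (G a r) * w a) * (\<Sum>b\<in>AS p q s. cnj (v b) * G b s)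
       + (\<Sum>a\<in>AS p q r. cnj (G a r) * v a) * (\<Sum>b\<in>AS p q s. cnj (w b) * G b s)"
    by (rule sum_outer[OF fin fin])
  finally show ?thesis by (simp add: cnj_sum mult.commute)
qed

lemma AS_pr: "AS (min c p) (max c p) r = AS c p r"
  unfolding AS_def by (auto simp: min_def max_def)

lemma blk_inv:
  "S \<subseteq> {1..n} \<Longrightarrow> c \<in> S \<Longrightarrow> \<forall>a\<in>S. \<forall>b\<in>S. X a b = w a * cnj (v b) + v a * cnj (w b) \<Longrightarrow>
   v c = 0 \<Longrightarrow> w c \<noteq> 0 \<Longrightarrow> \<forall>p\<in>set ps. p \<in> S \<and> p \<noteq> c \<and> w p = 0 \<Longrightarrow> distinct ps \<Longrightarrow>
   map fst L = map (pr c) ps \<Longrightarrow> rots n L \<Longrightarrow> zp n L X \<Longrightarrow>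
   (\<forall>p\<in>set ps. v p = 0) \<and> (\<exists>w'. \<forall>a\<in>S. \<forall>b\<in>S. run n L X a b = w' a * cnj (v b) + v a * cnj (w' b))"
proof (induction ps arbitrary: L X w)
  case Nil
  then show ?case by auto
next
  case (Cons p ps)
  obtain x L' where L: "L = x # L'" "fst x = pr c p" "map fst L' = map (pr c) ps"
    using Cons.prems(8) by (cases L) auto
  obtain G where x: "x = (pr c p, G)" using L(2) by (metis prod.collapse)
  have rr: "rot n (min c p) (max c p) G" "rots n L'" using Cons.prems(9) L x by (auto simp: pr_def)
  have pS: "p \<in> S" "p \<noteq> c" "w p = 0" using Cons.prems(6) by auto
  have G: "inpl n (min c p) (max c p) G" "min c p \<in> {1..n}" "max c p \<in> {1..n}" "min c p \<noteq> max c p"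
    using rot_inpl[OF rr(1)] rot_range[OF rr(1)] by auto
  have Gd: "G c c \<noteq> 0" using rr(1) unfolding rot_def by (cases "c \<le> p") (auto simp: min_def max_def)
  have zz: "X (min c p) (max c p) = 0" "zp n L' (cj n G X)" using Cons.prems(10) L x by (auto simp: pr_def)
  have vp: "v p = 0"
  proof (cases "p < c")
    case True
    then have "X p c = 0" using zz(1) by (simp add: min_def max_def)
    then have "v p * cnj (w c) = 0" using Cons.prems(3,4) pS Cons.prems(2) by auto
    then show ?thesis using Cons.prems(5) by simp
  next
    case False
    then have "X c p = 0" using zz(1) pS(2) by (simp add: min_def max_def)
    then have "w c * cnj (v p) = 0" using Cons.prems(3,4) pS Cons.prems(2) by auto
    then show ?thesis using Cons.prems(5) by simp
  qed
  define w1 where "w1 r = (\<Sum>a\<in>AS c p r. cnj (G a r) * w a)" for r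
  have Sp: "min c p \<in> S" "max c p \<in> S" using pS Cons.prems(2) by (auto simp: min_def max_def)
  have v1: "(\<Sum>a\<in>AS c p r. cnj (G a r) * v a) = v r" if r: "r \<in> S" for r
  proof (cases "r \<in> {c,p}")
    case True
    then show ?thesis unfolding AS_def using vp Cons.prems(4) pS(2) by auto
  next
    case False
    have "r \<notin> {min c p, max c p}" using False by (auto simp: min_def max_def)
    then have "G r r = 1" using inpl_diag[OF G(1), of r] r Cons.prems(1) by auto
    then show ?thesis unfolding AS_def using False by auto
  qed
  have X1: "\<forall>a\<in>S. \<forall>b\<in>S. cj n G X a b = w1 a * cnj (v b) + v a * cnj (w1 b)"
  proof (intro ballI)
    fix a b assume ab: "a \<in> S" "b \<in> S"
    show "cj n G X a b = w1 a * cnj (v b) + v a * cnj (w1 b)"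
      using cj_outer[OF G Cons.prems(1) Sp Cons.prems(3) ab] unfolding AS_pr w1_def v1[OF ab(1)] v1[OF ab(2)] .
  qed
  have w1c: "w1 c \<noteq> 0"
    unfolding w1_def AS_def using pS(2,3) Gd Cons.prems(5) by auto
  have w1p: "\<forall>p'\<in>set ps. p' \<in> S \<and> p' \<noteq> c \<and> w1 p' = 0"
  proof
    fix p' assume p': "p' \<in> set ps"
    have "p' \<noteq> p" using Cons.prems(7) p' by auto
    moreover have "p' \<in> S" "p' \<noteq> c" "w p' = 0" using Cons.prems(6) p' by auto
    moreover have "G p' p' = 1" using inpl_diag[OF G(1), of p'] calculation Cons.prems(1) by (auto simp: min_def max_def)
    ultimately show "p' \<in> S \<and> p' \<noteq> c \<and> w1 p' = 0" unfolding w1_def AS_def by auto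
  qed
  have IH: "(\<forall>p\<in>set ps. v p = 0) \<and> (\<exists>w'. \<forall>a\<in>S. \<forall>b\<in>S. run n L' (cj n G X) a b = w' a * cnj (v b) + v a * cnj (w' b))"
    using Cons.IH[OF Cons.prems(1,2) X1 Cons.prems(4) w1c w1p _ L(3) rr(2) zz(2)] Cons.prems(7) by simp
  show ?case using IH vp unfolding L x by simp
qed

lemma blk:
  assumes S: "S = insert c I" "S \<subseteq> {1..n}" "c \<notin> I" and ps: "set ps = I" "distinct ps"
    and L: "map fst L = map (pr c) ps" "rots n L"
    and X: "hermitian_mat n X" "zdiag n X" "\<forall>a\<in>I. \<forall>b\<in>I. X a b = 0" and z: "zp n L X"
  shows "\<forall>a\<in>S. \<forall>b\<in>S. run n L X a b = 0"
proof -
  define v where "v a = (if a = c then 0 else X a c)" for a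
  define w where "w a = (if a = c then 1 else (0::complex))" for a
  have cS: "c \<in> S" using S by auto
  have o: "\<forall>a\<in>S. \<forall>b\<in>S. X a b = w a * cnj (v b) + v a * cnj (w b)"
  proof (intro ballI)
    fix a b assume ab: "a \<in> S" "b \<in> S"
    have ab': "a \<in> {1..n}" "b \<in> {1..n}" "c \<in> {1..n}" using ab S by auto
    show "X a b = w a * cnj (v b) + v a * cnj (w b)"
    proof (cases "a = c")
      case True
      then show ?thesis
      proof (cases "b = c")
        case True then show ?thesis using \<open>a = c\<close> X(2) ab' unfolding zdiag_def v_def w_def by simp
      next
        case False
        have "X c b = cnj (X b c)" using X(1) ab' unfolding hermitian_mat_def by blast
        then show ?thesis using \<open>a = c\<close> False unfolding v_def w_def by simp
      qed
    next
      case False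
      then show ?thesis
      proof (cases "b = c")
        case True then show ?thesis using \<open>a \<noteq> c\<close> unfolding v_def w_def by simp
      next
        case False then show ?thesis using \<open>a \<noteq> c\<close> X(3) ab S(1) unfolding v_def w_def by simp
      qed
    qed
  qed
  have wp: "\<forall>p\<in>set ps. p \<in> S \<and> p \<noteq> c \<and> w p = 0" using ps S unfolding w_def by auto
  have r: "(\<forall>p\<in>set ps. v p = 0) \<and> (\<exists>w'. \<forall>a\<in>S. \<forall>b\<in>S. run n L X a b = w' a * cnj (v b) + v a * cnj (w' b))"
    by (rule blk_inv[OF S(2) cS o _ _ wp ps(2) L z]) (auto simp: v_def w_def)
  then have v0: "\<forall>a\<in>S. v a = 0" using ps S unfolding v_def by auto
  then show ?thesis using r by auto
qed

fun chainok :: "nat \<Rightarrow> nat set \<Rightarrow> (nat \<times> nat list) list \<Rightarrow> bool" where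
  "chainok n I [] = True"
| "chainok n I ((c,ps) # cs) = (c \<in> {1..n} \<and> c \<notin> I \<and> set ps = I \<and> distinct ps \<and> chainok n (insert c I) cs)"

definition cplanes :: "(nat \<times> nat list) list \<Rightarrow> (nat \<times> nat) list" where
  "cplanes cs = concat (map (\<lambda>(c,ps). map (pr c) ps) cs)"

lemma chain:
  "chainok n I cs \<Longrightarrow> I \<subseteq> {1..n} \<Longrightarrow> map fst L = cplanes cs \<Longrightarrow> rots n L \<Longrightarrow> hermitian_mat n X \<Longrightarrow>
   zdiag n X \<Longrightarrow> \<forall>a\<in>I. \<forall>b\<in>I. X a b = 0 \<Longrightarrow> zp n L X \<Longrightarrow>
   \<forall>a\<in>I \<union> fst ` set cs. \<forall>b\<in>I \<union> fst ` set cs. run n L X a b = 0"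
proof (induction cs arbitrary: I L X)
  case Nil then show ?case by (simp add: cplanes_def)
next
  case (Cons y cs)
  obtain c ps where y: "y = (c,ps)" by (metis prod.collapse)
  have ch: "c \<in> {1..n}" "c \<notin> I" "set ps = I" "distinct ps" "chainok n (insert c I) cs"
    using Cons.prems(1) y by auto
  have "map fst L = map (pr c) ps @ cplanes cs" using Cons.prems(3) y by (simp add: cplanes_def)
  then obtain L1 L2 where L: "L = L1 @ L2" "map (pr c) ps = map fst L1" "cplanes cs = map fst L2"
    using map_eq_append_conv[THEN iffD1] by metis
  have r: "rots n L1" "rots n L2" using Cons.prems(4) L by auto
  have zz: "zp n L1 X" "zp n L2 (run n L1 X)" using Cons.prems(8) L by (auto simp: zp_append)
  have S: "insert c I \<subseteq> {1..n}" using ch Cons.prems(2) by auto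
  have b: "\<forall>a\<in>insert c I. \<forall>b\<in>insert c I. run n L1 X a b = 0"
    by (rule blk[OF refl S ch(2) ch(3,4) L(2)[symmetric] r(1) Cons.prems(5-7) zz(1)])
  have hz: "hermitian_mat n (run n L1 X) \<and> zdiag n (run n L1 X)"
    by (rule zp_run_inv[OF r(1) Cons.prems(5,6) zz(1)])
  have "\<forall>a\<in>insert c I \<union> fst ` set cs. \<forall>b\<in>insert c I \<union> fst ` set cs. run n L2 (run n L1 X) a b = 0"
    using Cons.IH[OF ch(5) S L(3)[symmetric] r(2) _ _ b zz(2)] hz by blast
  then show ?case unfolding L run_append y by simp
qed

lemma good_chain:
  assumes ch: "chainok n {i0} cs" and i0: "i0 \<in> {1..n}" and full: "{1..n} \<subseteq> insert i0 (fst ` set cs)"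
  shows "good n (cplanes cs)"
  unfolding good_def
proof (intro allI impI)
  fix L X assume m: "map fst L = cplanes cs" and r: "rots n L" and h: "hermitian_mat n X"
    and z: "zdiag n X" and zz: "zp n L X"
  have "\<forall>a\<in>{i0}. \<forall>b\<in>{i0}. X a b = 0" using z i0 by (simp add: zdiag_def)
  then have "\<forall>a\<in>{i0} \<union> fst ` set cs. \<forall>b\<in>{i0} \<union> fst ` set cs. run n L X a b = 0"
    using chain[OF ch _ m r h z _ zz] i0 by blast
  then have "zero_mat n (run n L X)" using full unfolding zero_mat_def by blast
  then show "zero_mat n X" by (rule run_zero_inv[OF r])
qed




lemma col_chain:
  assumes t: "\<forall>j. \<tau> j permutes {1..<j}"
  shows "Suc n - a = k \<Longrightarrow> 2 \<le> a \<Longrightarrow> chainok n {1..<a} (map (\<lambda>j. (j, map (\<tau> j) [1..<j])) [a..<Suc n])"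
proof (induction k arbitrary: a)
  case 0 then show ?case by simp
next
  case (Suc k)
  then have a: "a < Suc n" by simp
  have e: "[a..<Suc n] = a # [Suc a..<Suc n]" using a by (simp add: upt_conv_Cons)
  have s: "set (map (\<tau> a) [1..<a]) = {1..<a}" using permutes_image[OF t[rule_format, of a]] by simp
  have d: "distinct (map (\<tau> a) [1..<a])"
    using permutes_inj_on[OF t[rule_format, of a]] by (simp add: distinct_map inj_on_def)
  have i: "insert a {1..<a} = {1..<Suc a}" using Suc.prems(2) by auto
  have "chainok n {1..<Suc a} (map (\<lambda>j. (j, map (\<tau> j) [1..<j])) [Suc a..<Suc n])"
    using Suc.IH[of "Suc a"] Suc.prems by simp
  then show ?case unfolding e using a s d i Suc.prems(2) by simp
qed

lemma col_good: assumes n: "1 \<le> n" and os: "os \<in> col_cyclic n" shows "good n os"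
proof -
  obtain \<tau> where t: "\<forall>j. \<tau> j permutes {1..<j}"
    and o: "os = concat (map (\<lambda>j. map (\<lambda>i. (\<tau> j i, j)) [1..<j]) [2..<Suc n])"
    using os unfolding col_cyclic_def by blast
  define cs where "cs = map (\<lambda>j. (j, map (\<tau> j) [1..<j])) [2..<Suc n]"
  have cp0: "cplanes cs = concat (map (\<lambda>j. map (\<lambda>i. pr j (\<tau> j i)) [1..<j]) [2..<Suc n])"
    unfolding cplanes_def cs_def by (simp add: comp_def)
  have cp: "cplanes cs = os"
    unfolding cp0 o
  proof (rule arg_cong[where f=concat], rule map_cong[OF refl], rule map_cong[OF refl])
    fix j i assume i: "i \<in> set [1..<j]"
    have "\<tau> j i \<in> {1..<j}" using i permutes_in_image[OF t[rule_format, of j]] by simp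
    then show "pr j (\<tau> j i) = (\<tau> j i, j)" unfolding pr_def by auto
  qed
  have "chainok n {1..<2} (map (\<lambda>j. (j, map (\<tau> j) [1..<j])) [2..<Suc n])"
    by (rule col_chain[OF t refl]) simp
  moreover have e: "{1..<2::nat} = {1}" by auto
  ultimately have ch: "chainok n {1} cs" unfolding cs_def by (simp only: e)
  have "map fst cs = [2..<Suc n]" unfolding cs_def map_map by (simp add: comp_def del: upt_Suc)
  then have "fst ` set cs = {2..<Suc n}" by (metis set_map set_upt)
  then have full: "{1..n} \<subseteq> insert 1 (fst ` set cs)" by auto
  show ?thesis using good_chain[OF ch _ full] n cp by simp
qed

lemma row_chain:
  assumes t: "\<forall>i. \<tau> i permutes {Suc i..n}"
  shows "a < n \<Longrightarrow> chainok n {Suc a..n} (map (\<lambda>i. (i, map (\<tau> i) [Suc i..<Suc n])) (rev [1..<Suc a]))"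
proof (induction a)
  case 0 then show ?case by simp
next
  case (Suc a)
  have e: "rev [1..<Suc (Suc a)] = Suc a # rev [1..<Suc a]" by simp
  have su: "set [Suc (Suc a)..<Suc n] = {Suc (Suc a)..n}"
    by (simp only: set_upt atLeastLessThanSuc_atLeastAtMost)
  have s: "set (map (\<tau> (Suc a)) [Suc (Suc a)..<Suc n]) = {Suc (Suc a)..n}"
    by (simp only: set_map su permutes_image[OF t[rule_format, of "Suc a"]])
  have d: "distinct (map (\<tau> (Suc a)) [Suc (Suc a)..<Suc n])"
    unfolding distinct_map su using permutes_inj_on[OF t[rule_format, of "Suc a"]] by simp
  have i: "insert (Suc a) {Suc (Suc a)..n} = {Suc a..n}" using Suc.prems by auto
  have "chainok n {Suc a..n} (map (\<lambda>i. (i, map (\<tau> i) [Suc i..<Suc n])) (rev [1..<Suc a]))"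
    using Suc.IH Suc.prems by simp
  then show ?case unfolding e using s d i Suc.prems by simp
qed

lemma row_good: assumes n: "1 \<le> n" and os: "os \<in> row_cyclic n" shows "good n os"
proof -
  obtain \<tau> where t: "\<forall>i. \<tau> i permutes {Suc i..n}"
    and o: "os = concat (map (\<lambda>i. map (\<lambda>j. (i, \<tau> i j)) [Suc i..<Suc n]) (rev [1..<n]))"
    using os unfolding row_cyclic_def by blast
  define cs where "cs = map (\<lambda>i. (i, map (\<tau> i) [Suc i..<Suc n])) (rev [1..<n])"
  have cp0: "cplanes cs = concat (map (\<lambda>i. map (\<lambda>j. pr i (\<tau> i j)) [Suc i..<Suc n]) (rev [1..<n]))"
    unfolding cplanes_def cs_def by (simp add: comp_def)
  have cp: "cplanes cs = os"
    unfolding cp0 o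
  proof (rule arg_cong[where f=concat], rule map_cong[OF refl], rule map_cong[OF refl])
    fix i j assume j: "j \<in> set [Suc i..<Suc n]"
    have "j \<in> {Suc i..n}" using j by (simp only: set_upt atLeastLessThanSuc_atLeastAtMost)
    then have "\<tau> i j \<in> {Suc i..n}" using permutes_in_image[OF t[rule_format, of i]] by blast
    then show "pr i (\<tau> i j) = (i, \<tau> i j)" unfolding pr_def by auto
  qed
  have ch: "chainok n {n} cs"
    using row_chain[OF t, of "n - 1"] n unfolding cs_def by simp
  have "map fst cs = rev [1..<n]" unfolding cs_def map_map by (simp add: comp_def del: upt_Suc)
  then have "fst ` set cs = {1..<n}" by (metis set_map set_rev set_upt)
  then have full: "{1..n} \<subseteq> insert n (fst ` set cs)" by auto
  show ?thesis using good_chain[OF ch _ full] n cp by simp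
qed

lemma good_Pg: "good n os \<Longrightarrow> Pg n os"
  unfolding Pg_def using good_append_right[of n os "[]"] by (metis rep_Suc rep_0)

lemma serial_Pg: assumes n: "1 \<le> n" and os: "os \<in> serial_sp n" shows "Pg n os"
proof -
  have "good n os"
    using os unfolding serial_sp_def
    using col_good[OF n] row_good[OF n] good_rev[OF col_good[OF n]] good_rev[OF row_good[OF n]]
    by (metis Un_iff mem_Collect_eq rev_rev_ident)
  then show ?thesis by (rule good_Pg)
qed

lemma gen_serial_Pg: assumes n: "1 \<le> n" and os: "os \<in> gen_serial n" shows "Pg n os"
proof -
  obtain osA osB where o: "osB \<in> serial_sp n"
    "(perm_equiv n os osA \<and> weak_equiv osA osB) \<or> (weak_equiv os osA \<and> perm_equiv n osA osB)"
    using os unfolding gen_serial_def by blast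
  have "Pg n osB" by (rule serial_Pg[OF n o(1)])
  then show ?thesis using o(2) Pg_weak Pg_perm by blast
qed




definition fro :: "nat \<Rightarrow> cmat \<Rightarrow> real" where
  "fro n X = (\<Sum>r\<in>{1..n}. \<Sum>s\<in>{1..n}. (cmod (X r s))\<^sup>2)"

definition dg :: "nat \<Rightarrow> cmat \<Rightarrow> real" where
  "dg n X = (\<Sum>r\<in>{1..n}. (cmod (X r r))\<^sup>2)"

definition sf :: "nat \<Rightarrow> cmat \<Rightarrow> real" where
  "sf n X = (\<Sum>r\<in>{1..n}. \<Sum>s\<in>{1..n}. if r = s then 0 else (cmod (X r s))\<^sup>2)"

lemma off_norm_sf: "off_norm n X = sqrt (sf n X)"
  unfolding off_norm_def sf_def ..

lemma sf_eq: "sf n X = fro n X - dg n X"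
proof -
  have "(\<Sum>s\<in>{1..n}. if r = s then 0 else (cmod (X r s))\<^sup>2) = (\<Sum>s\<in>{1..n}. (cmod (X r s))\<^sup>2) - (cmod (X r r))\<^sup>2"
    if r: "r \<in> {1..n}" for r
  proof -
    have "(\<Sum>s\<in>{1..n}. if r = s then 0 else (cmod (X r s))\<^sup>2)
        = (\<Sum>s\<in>{1..n}. (cmod (X r s))\<^sup>2 - (if r = s then (cmod (X r s))\<^sup>2 else 0))"
      by (rule sum.cong) auto
    also have "\<dots> = (\<Sum>s\<in>{1..n}. (cmod (X r s))\<^sup>2) - (cmod (X r r))\<^sup>2"
      using r by (simp add: sum_subtractf sum.delta)
    finally show ?thesis .
  qed
  then show ?thesis unfolding sf_def fro_def dg_def by (simp add: sum_subtractf)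
qed

lemma sf_nonneg: "0 \<le> sf n X" unfolding sf_def by (intro sum_nonneg) auto

lemma row_iso:
  fixes x :: "nat \<Rightarrow> complex"
  assumes u: "\<forall>t\<in>R. \<forall>u\<in>R. (\<Sum>s\<in>R. G t s * cnj (G u s)) = idm t u" and f: "finite R"
  shows "(\<Sum>s\<in>R. (cmod (\<Sum>t\<in>R. x t * G t s))\<^sup>2) = (\<Sum>t\<in>R. (cmod (x t))\<^sup>2)"
proof -
  have "complex_of_real (\<Sum>s\<in>R. (cmod (\<Sum>t\<in>R. x t * G t s))\<^sup>2)
     = (\<Sum>s\<in>R. (\<Sum>t\<in>R. x t * G t s) * cnj (\<Sum>u\<in>R. x u * G u s))"
    by (simp only: of_real_sum complex_norm_square)
  also have "\<dots> = (\<Sum>s\<in>R. \<Sum>u\<in>R. \<Sum>t\<in>R. x t * cnj (x u) * (G t s * cnj (G u s)))"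
    by (simp add: cnj_sum sum_distrib_left sum_distrib_right mult_ac)
  also have "\<dots> = (\<Sum>u\<in>R. \<Sum>t\<in>R. \<Sum>s\<in>R. x t * cnj (x u) * (G t s * cnj (G u s)))"
    by (subst sum.swap, rule sum.cong[OF refl], rule sum.swap)
  also have "\<dots> = (\<Sum>u\<in>R. \<Sum>t\<in>R. x t * cnj (x u) * idm t u)"
    by (rule sum.cong[OF refl], rule sum.cong[OF refl], simp only: sum_distrib_left[symmetric], use u in simp)
  also have "\<dots> = (\<Sum>t\<in>R. x t * cnj (x t))"
    by (rule sum.cong[OF refl]) (simp add: idm_def f if_distrib cong: if_cong)
  also have "\<dots> = complex_of_real (\<Sum>t\<in>R. (cmod (x t))\<^sup>2)"
    by (simp only: of_real_sum complex_norm_square)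
  finally show ?thesis using of_real_eq_iff by blast
qed

lemma uu_sum: "\<forall>r\<in>{1..n}. \<forall>s\<in>{1..n}. mmult n G (adj G) r s = idm r s \<Longrightarrow>
  \<forall>t\<in>{1..n}. \<forall>u\<in>{1..n}. (\<Sum>s\<in>{1..n}. G t s * cnj (G u s)) = idm t u"
  unfolding mmult_def adj_def by simp

lemma fro_right: assumes u: "\<forall>r\<in>{1..n}. \<forall>s\<in>{1..n}. mmult n G (adj G) r s = idm r s"
  shows "fro n (mmult n Y G) = fro n Y"
  unfolding fro_def mmult_def
  by (rule sum.cong[OF refl], rule row_iso[OF uu_sum[OF u]], simp)

lemma fro_left: assumes u: "\<forall>r\<in>{1..n}. \<forall>s\<in>{1..n}. mmult n G (adj G) r s = idm r s"
  shows "fro n (mmult n (adj G) Y) = fro n Y"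
proof -
  have "fro n (mmult n (adj G) Y) = (\<Sum>r\<in>{1..n}. \<Sum>s\<in>{1..n}. (cmod (\<Sum>t\<in>{1..n}. cnj (Y t s) * G t r))\<^sup>2)"
    unfolding fro_def mmult_def adj_def
  proof (intro sum.cong refl)
    fix r s
    have e: "cnj (\<Sum>t\<in>{1..n}. cnj (G t r) * Y t s) = (\<Sum>t\<in>{1..n}. cnj (Y t s) * G t r)"
      by (simp add: cnj_sum mult.commute)
    have "cmod (\<Sum>t\<in>{1..n}. cnj (G t r) * Y t s) = cmod (cnj (\<Sum>t\<in>{1..n}. cnj (G t r) * Y t s))"
      by (simp only: complex_mod_cnj)
    also have "\<dots> = cmod (\<Sum>t\<in>{1..n}. cnj (Y t s) * G t r)" by (simp only: e)
    finally show "(cmod (\<Sum>t\<in>{1..n}. cnj (G t r) * Y t s))\<^sup>2 = (cmod (\<Sum>t\<in>{1..n}. cnj (Y t s) * G t r))\<^sup>2" by simp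
  qed
  also have "\<dots> = (\<Sum>s\<in>{1..n}. \<Sum>r\<in>{1..n}. (cmod (\<Sum>t\<in>{1..n}. cnj (Y t s) * G t r))\<^sup>2)"
    by (rule sum.swap)
  also have "\<dots> = (\<Sum>s\<in>{1..n}. \<Sum>t\<in>{1..n}. (cmod (cnj (Y t s)))\<^sup>2)"
    by (rule sum.cong[OF refl], rule row_iso[OF uu_sum[OF u]], simp)
  also have "\<dots> = fro n Y" unfolding fro_def by (simp, rule sum.swap)
  finally show ?thesis .
qed

lemma fro_cj: "\<forall>r\<in>{1..n}. \<forall>s\<in>{1..n}. mmult n G (adj G) r s = idm r s \<Longrightarrow> fro n (cj n G X) = fro n X"
  unfolding cj_def by (simp add: fro_right fro_left)




lemma fro_support:
  assumes B: "B \<subseteq> {1..n}" and z: "\<forall>r\<in>{1..n}. \<forall>s\<in>{1..n}. (r \<notin> B \<or> s \<notin> B) \<longrightarrow> Y r s = 0"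
  shows "fro n Y = (\<Sum>r\<in>B. \<Sum>s\<in>B. (cmod (Y r s))\<^sup>2)"
proof -
  have "fro n Y = (\<Sum>r\<in>{1..n}. \<Sum>s\<in>B. (cmod (Y r s))\<^sup>2)"
    unfolding fro_def
  proof (rule sum.cong[OF refl])
    fix r assume r: "r \<in> {1..n}"
    show "(\<Sum>s\<in>{1..n}. (cmod (Y r s))\<^sup>2) = (\<Sum>s\<in>B. (cmod (Y r s))\<^sup>2)"
      by (rule sum.mono_neutral_right[OF _ B]) (use z r in auto)
  qed
  also have "\<dots> = (\<Sum>r\<in>B. \<Sum>s\<in>B. (cmod (Y r s))\<^sup>2)"
  proof (rule sum.mono_neutral_right[OF _ B])
    show "finite {1..n}" by simp
    show "\<forall>r\<in>{1..n} - B. (\<Sum>s\<in>B. (cmod (Y r s))\<^sup>2) = 0"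
    proof
      fix r assume r: "r \<in> {1..n} - B"
      have "Y r s = 0" if "s \<in> B" for s using z r B that by auto
      then show "(\<Sum>s\<in>B. (cmod (Y r s))\<^sup>2) = 0" by simp
    qed
  qed
  finally show ?thesis .
qed

definition blkm :: "nat \<Rightarrow> nat \<Rightarrow> cmat \<Rightarrow> cmat" where
  "blkm p q X = (\<lambda>r s. if r \<in> {p,q} \<and> s \<in> {p,q} then X r s else 0)"

lemma cj_blkm:
  assumes G: "inpl n p q G" and pq: "p \<in> {1..n}" "q \<in> {1..n}" "p \<noteq> q" and rs: "r \<in> {1..n}" "s \<in> {1..n}"
  shows "cj n G (blkm p q X) r s = blkm p q (cj n G X) r s"
proof -
  have e: "blkm p q X p p = X p p" "blkm p q X p q = X p q" "blkm p q X q p = X q p" "blkm p q X q q = X q q"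
    unfolding blkm_def by simp_all
  have z: "blkm p q X a b = 0" if "a \<notin> {p,q} \<or> b \<notin> {p,q}" for a b
    using that unfolding blkm_def by auto
  show ?thesis
  proof (cases "r \<in> {p,q} \<and> s \<in> {p,q}")
    case True
    then have R: "blkm p q (cj n G X) r s = cj n G X r s" unfolding blkm_def by simp
    have r: "r \<in> {p,q}" and s: "s \<in> {p,q}" using True by auto
    have "cj n G (blkm p q X) r s = cj n G X r s"
      unfolding cj_ii[OF G pq rs r s, of X] cj_ii[OF G pq rs r s, of "blkm p q X"] e ..
    then show ?thesis unfolding R .
  next
    case False
    then have R: "blkm p q (cj n G X) r s = 0" unfolding blkm_def by auto
    show ?thesis
    proof (cases "r \<in> {p,q}")
      case True
      then have sn: "s \<notin> {p,q}" using False by blast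
      have "blkm p q X p s = 0" "blkm p q X q s = 0" using z sn by blast+
      then show ?thesis unfolding R cj_io[OF G pq rs True sn] by simp
    next
      case rn: False
      show ?thesis
      proof (cases "s \<in> {p,q}")
        case True
        have "blkm p q X r p = 0" "blkm p q X r q = 0" using z rn by blast+
        then show ?thesis unfolding R cj_oi[OF G pq rs rn True] by simp
      next
        case sn: False
        have "blkm p q X r s = 0" using z rn by blast
        then show ?thesis unfolding R cj_oo[OF G pq(1,2) rs rn sn] .
      qed
    qed
  qed
qed

lemma fro_blkm: "p \<in> {1..n} \<Longrightarrow> q \<in> {1..n} \<Longrightarrow> p \<noteq> q \<Longrightarrow>
  fro n (blkm p q X) = (cmod (X p p))\<^sup>2 + (cmod (X p q))\<^sup>2 + (cmod (X q p))\<^sup>2 + (cmod (X q q))\<^sup>2"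
  by (subst fro_support[of "{p,q}"]) (auto simp: blkm_def)

lemma fro_blkm_cj:
  assumes G: "rot n p q G"
  shows "fro n (blkm p q (cj n G X)) = fro n (blkm p q X)"
proof -
  have pq: "inpl n p q G" "p \<in> {1..n}" "q \<in> {1..n}" "p \<noteq> q" using rot_inpl[OF G] rot_range[OF G] by auto
  have "eqm n (blkm p q (cj n G X)) (cj n G (blkm p q X))"
    unfolding eqm_def using cj_blkm[OF pq] by simp
  then have "fro n (blkm p q (cj n G X)) = fro n (cj n G (blkm p q X))"
    unfolding fro_def eqm_def by simp
  also have "\<dots> = fro n (blkm p q X)" by (rule fro_cj[OF rot_uu[OF G]])
  finally show ?thesis .
qed

lemma dg_split: "p \<in> {1..n} \<Longrightarrow> q \<in> {1..n} \<Longrightarrow> p \<noteq> q \<Longrightarrow>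
  dg n X = (\<Sum>r\<in>{1..n} - {p,q}. (cmod (X r r))\<^sup>2) + (cmod (X p p))\<^sup>2 + (cmod (X q q))\<^sup>2"
proof -
  assume pq: "p \<in> {1..n}" "q \<in> {1..n}" "p \<noteq> q"
  have "dg n X = (\<Sum>r\<in>{1..n} - {p,q}. (cmod (X r r))\<^sup>2) + (\<Sum>r\<in>{p,q}. (cmod (X r r))\<^sup>2)"
    unfolding dg_def using pq by (subst sum.subset_diff[of "{p,q}"]) auto
  then show ?thesis using pq by simp
qed

lemma herm_cmod: "hermitian_mat n X \<Longrightarrow> p \<in> {1..n} \<Longrightarrow> q \<in> {1..n} \<Longrightarrow> cmod (X q p) = cmod (X p q)"
  unfolding hermitian_mat_def by (metis complex_mod_cnj)

lemma sf_step:
  assumes G: "rot n p q G" and h: "hermitian_mat n X"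
  shows "sf n (cj n G X) = sf n X - 2 * (cmod (X p q))\<^sup>2 + 2 * (cmod (cj n G X p q))\<^sup>2"
proof -
  have pq: "inpl n p q G" "p \<in> {1..n}" "q \<in> {1..n}" "p \<noteq> q" using rot_inpl[OF G] rot_range[OF G] by auto
  define X' where "X' = cj n G X"
  have h': "hermitian_mat n X'" unfolding X'_def by (rule cj_herm[OF h])
  have f: "fro n X' = fro n X" unfolding X'_def by (rule fro_cj[OF rot_uu[OF G]])
  have b: "fro n (blkm p q X') = fro n (blkm p q X)" unfolding X'_def by (rule fro_blkm_cj[OF G])
  have b': "(cmod (X' p p))\<^sup>2 + (cmod (X' q q))\<^sup>2 + 2 * (cmod (X' p q))\<^sup>2
          = (cmod (X p p))\<^sup>2 + (cmod (X q q))\<^sup>2 + 2 * (cmod (X p q))\<^sup>2"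
    using b unfolding fro_blkm[OF pq(2-4)] herm_cmod[OF h pq(2,3)] herm_cmod[OF h' pq(2,3)] by simp
  have o: "(\<Sum>r\<in>{1..n} - {p,q}. (cmod (X' r r))\<^sup>2) = (\<Sum>r\<in>{1..n} - {p,q}. (cmod (X r r))\<^sup>2)"
    unfolding X'_def by (rule sum.cong[OF refl], subst cj_oo[OF pq(1-3)], auto)
  show ?thesis
    unfolding X'_def[symmetric] sf_eq f dg_split[OF pq(2-4), of X'] dg_split[OF pq(2-4), of X] o
    using b' by simp
qed

definition off :: "cmat \<Rightarrow> cmat" where
  "off X = (\<lambda>r s. if r = s then 0 else X r s)"

lemma off_herm: assumes "hermitian_mat n X" shows "hermitian_mat n (off X)"
  unfolding hermitian_mat_def
proof (intro ballI)
  fix r s assume rs: "r \<in> {1..n}" "s \<in> {1..n}"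
  have "X r s = cnj (X s r)" using assms rs unfolding hermitian_mat_def by blast
  then show "off X r s = cnj (off X s r)" unfolding off_def by simp
qed

lemma off_zdiag: "zdiag n (off X)" unfolding zdiag_def off_def by simp

lemma sf_off: "sf n (off X) = sf n X" unfolding sf_def off_def by (rule sum.cong[OF refl], rule sum.cong) auto

lemma zero_sf: "zero_mat n X \<Longrightarrow> sf n X = 0" unfolding sf_def zero_mat_def by (auto intro!: sum.neutral)

lemma off_step:
  assumes G: "rot n p q G" and h: "hermitian_mat n X" and x: "X p q = 0" and x': "cj n G X p q = 0"
  shows "eqm n (off (cj n G X)) (cj n G (off X))"
  unfolding eqm_def
proof (intro ballI)
  fix r s assume rs: "r \<in> {1..n}" "s \<in> {1..n}"
  have pq: "inpl n p q G" "p \<in> {1..n}" "q \<in> {1..n}" "p \<noteq> q" using rot_inpl[OF G] rot_range[OF G] by auto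
  have oz: "zdiag n (cj n G (off X))"
    by (rule cj_zdiag[OF pq off_herm[OF h] off_zdiag]) (use x pq in \<open>simp add: off_def\<close>)
  have xqp: "X q p = 0" by (rule herm_zero[OF h pq(2,3) x])
  show "off (cj n G X) r s = cj n G (off X) r s"
  proof (cases "r = s")
    case True then show ?thesis using oz rs by (simp add: off_def zdiag_def)
  next
    case False
    have L: "off (cj n G X) r s = cj n G X r s" using False by (simp add: off_def)
    show ?thesis
    proof (cases "r \<in> {p,q}")
      case rin: True
      show ?thesis
      proof (cases "s \<in> {p,q}")
        case sin: True
        have "cj n G X r s = 0"
        proof -
          have "(r = p \<and> s = q) \<or> (r = q \<and> s = p)" using rin sin False by auto
          then show ?thesis using x' herm_zero[OF cj_herm[OF h] pq(2,3) x'] by auto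
        qed
        moreover have "cj n G (off X) r s = 0"
          by (rule cj_block_zero[OF pq rs rin sin]) (auto simp: off_def x xqp)
        ultimately show ?thesis using L by simp
      next
        case sout: False
        show ?thesis unfolding L cj_io[OF pq rs rin sout] using rin sout by (auto simp: off_def)
      qed
    next
      case rout: False
      show ?thesis
      proof (cases "s \<in> {p,q}")
        case sin: True
        show ?thesis unfolding L cj_oi[OF pq rs rout sin] using rout sin by (auto simp: off_def)
      next
        case sout: False
        show ?thesis unfolding L cj_oo[OF pq(1-3) rs rout sout] using False by (simp add: off_def)
      qed
    qed
  qed
qed




lemma tendsto_mmult:
  assumes "\<forall>t\<in>{1..n}. (\<lambda>m. A m r t) \<longlonglongrightarrow> A0 r t" "\<forall>t\<in>{1..n}. (\<lambda>m. B m t s) \<longlonglongrightarrow> B0 t s"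
  shows "(\<lambda>m. mmult n (A m) (B m) r s) \<longlonglongrightarrow> mmult n A0 B0 r s"
  unfolding mmult_def using assms by (intro tendsto_sum tendsto_mult) auto

lemma tendsto_cj:
  assumes G: "\<forall>r\<in>{1..n}. \<forall>s\<in>{1..n}. (\<lambda>m. G m r s) \<longlonglongrightarrow> G0 r s"
    and X: "\<forall>r\<in>{1..n}. \<forall>s\<in>{1..n}. (\<lambda>m. X m r s) \<longlonglongrightarrow> X0 r s"
    and rs: "r \<in> {1..n}" "s \<in> {1..n}"
  shows "(\<lambda>m. cj n (G m) (X m) r s) \<longlonglongrightarrow> cj n G0 X0 r s"
  unfolding cj_def
proof (rule tendsto_mmult)
  show "\<forall>t\<in>{1..n}. (\<lambda>m. mmult n (adj (G m)) (X m) r t) \<longlonglongrightarrow> mmult n (adj G0) X0 r t"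
    using G X rs unfolding adj_def by (intro ballI tendsto_mmult) (auto intro: tendsto_cnj)
  show "\<forall>t\<in>{1..n}. (\<lambda>m. G m t s) \<longlonglongrightarrow> G0 t s" using G rs by auto
qed

lemma tendsto_sf:
  assumes X: "\<forall>r\<in>{1..n}. \<forall>s\<in>{1..n}. (\<lambda>m. X m r s) \<longlonglongrightarrow> X0 r s"
  shows "(\<lambda>m. sf n (X m)) \<longlonglongrightarrow> sf n X0"
  unfolding sf_def using X by (intro tendsto_sum) (auto intro!: tendsto_power tendsto_norm)

lemma bw_fin:
  fixes f :: "'i \<Rightarrow> nat \<Rightarrow> complex"
  assumes "finite I" "\<forall>i\<in>I. \<exists>B. \<forall>m. cmod (f i m) \<le> B"
  shows "\<exists>\<rho>. strict_mono \<rho> \<and> (\<forall>i\<in>I. convergent (\<lambda>m. f i (\<rho> m)))"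
  using assms
proof (induction I rule: finite_induct)
  case empty
  have "strict_mono (id::nat\<Rightarrow>nat)" by (simp add: strict_mono_def)
  then show ?case by blast
next
  case (insert i I)
  obtain \<rho> where r: "strict_mono \<rho>" "\<forall>i\<in>I. convergent (\<lambda>m. f i (\<rho> m))"
    using insert.IH insert.prems by auto
  obtain B where B: "\<forall>m. cmod (f i m) \<le> B" using insert.prems by auto
  have "bounded (range (\<lambda>m. f i (\<rho> m)))" unfolding bounded_iff using B by auto
  then obtain l r' where r': "strict_mono r'" "((\<lambda>m. f i (\<rho> m)) \<circ> r') \<longlonglongrightarrow> l"
    using bounded_imp_convergent_subsequence by blast
  have sm: "strict_mono (\<rho> \<circ> r')" using r(1) r'(1) by (simp add: strict_mono_o)
  have "\<forall>j\<in>insert i I. convergent (\<lambda>m. f j ((\<rho> \<circ> r') m))"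
  proof
    fix j assume j: "j \<in> insert i I"
    show "convergent (\<lambda>m. f j ((\<rho> \<circ> r') m))"
    proof (cases "j = i")
      case True then show ?thesis using r'(2) by (auto simp: convergent_def comp_def)
    next
      case False
      then have "convergent (\<lambda>m. f j (\<rho> m))" using r(2) j by auto
      then obtain L where "(\<lambda>m. f j (\<rho> m)) \<longlonglongrightarrow> L" by (auto simp: convergent_def)
      then have "((\<lambda>m. f j (\<rho> m)) \<circ> r') \<longlonglongrightarrow> L" by (rule LIMSEQ_subseq_LIMSEQ[OF _ r'(1)])
      then show ?thesis by (auto simp: convergent_def comp_def)
    qed
  qed
  then show ?case using sm by blast
qed

lemma pigeon:
  fixes g :: "nat \<Rightarrow> nat"
  assumes N: "0 < N"
  shows "\<exists>t<N. \<exists>\<rho>::nat\<Rightarrow>nat. strict_mono \<rho> \<and> (\<forall>m. g (\<rho> m) mod N = t)"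
proof -
  have U: "(UNIV :: nat set) = (\<Union>t\<in>{..<N}. {m. g m mod N = t})" using N by auto
  have "\<exists>t\<in>{..<N}. infinite {m. g m mod N = t}"
  proof (rule ccontr)
    assume "\<not> ?thesis"
    then have "finite (\<Union>t\<in>{..<N}. {m. g m mod N = t})" by auto
    then show False using U by (metis infinite_UNIV_nat)
  qed
  then obtain t where t: "t < N" "infinite {m. g m mod N = t}" by auto
  define \<rho> where "\<rho> = enumerate {m. g m mod N = t}"
  have a: "strict_mono \<rho>" unfolding \<rho>_def by (rule strict_mono_enumerate[OF t(2)])
  have b: "\<forall>m. g (\<rho> m) mod N = t" unfolding \<rho>_def using enumerate_in_set[OF t(2)] by auto
  show ?thesis
    apply (rule exI[of _ t])
    apply (rule conjI[OF t(1)])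
    apply (rule exI[of _ \<rho>])
    using a b by simp
qed

lemma cmod_sq_c: "complex_of_real ((cmod z)\<^sup>2) = z * cnj z"
  by (rule complex_norm_square)

lemma rot_qq:
  assumes u1: "\<forall>r\<in>{1..n}. \<forall>s\<in>{1..n}. mmult n (adj G) G r s = idm r s"
    and u2: "\<forall>r\<in>{1..n}. \<forall>s\<in>{1..n}. mmult n G (adj G) r s = idm r s"
    and G: "inpl n p q G" and pq: "p \<in> {1..n}" "q \<in> {1..n}" "p \<noteq> q" and d: "G p p \<noteq> 0"
  shows "G q q \<noteq> 0"
proof
  assume z: "G q q = 0"
  have Ga: "inpl n p q (adj G)" using G unfolding inpl_def adj_def idm_def
    by (metis complex_cnj_one complex_cnj_zero)
  have "mmult n (adj G) G q q = cnj (G p q) * G p q + cnj (G q q) * G q q"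
    using multL_plane[OF G pq(1,2) pq(2)] pq(3) by (simp add: AS_def)
  then have e1: "cnj (G p q) * G p q = 1" using u1 pq z by (simp add: idm_def)
  have "mmult n G (adj G) p p = G p p * cnj (G p p) + G p q * cnj (G p q)"
    using multR_plane[OF Ga pq(1,2) pq(1)] pq(3) by (simp add: AS_def adj_def)
  then have e2: "G p p * cnj (G p p) + G p q * cnj (G p q) = 1" using u2 pq by (simp add: idm_def)
  have "G p p * cnj (G p p) = 0" using e1 e2 by (simp add: mult.commute)
  then show False using d by simp
qed

lemma unitary_bound:
  assumes u1: "\<forall>r\<in>{1..n}. \<forall>s\<in>{1..n}. mmult n (adj G) G r s = idm r s" and rs: "r \<in> {1..n}" "s \<in> {1..n}"
  shows "cmod (G r s) \<le> 1"
proof -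
  have "complex_of_real (\<Sum>t\<in>{1..n}. (cmod (G t s))\<^sup>2) = mmult n (adj G) G s s"
    unfolding mmult_def adj_def of_real_sum cmod_sq_c by (simp add: mult.commute)
  also have "\<dots> = 1" using u1 rs by (simp add: idm_def)
  finally have "(\<Sum>t\<in>{1..n}. (cmod (G t s))\<^sup>2) = 1" by (metis of_real_eq_1_iff)
  moreover have "(cmod (G r s))\<^sup>2 \<le> (\<Sum>t\<in>{1..n}. (cmod (G t s))\<^sup>2)"
    by (rule member_le_sum[OF rs(1)]) auto
  ultimately have "(cmod (G r s))\<^sup>2 \<le> 1" by simp
  then show ?thesis by (simp add: power_le_one_iff abs_le_square_iff)
qed

lemma unitary_right:
  assumes u1: "\<forall>r\<in>{1..n}. \<forall>s\<in>{1..n}. mmult n (adj G) G r s = idm r s" and ns: "nonsingular_mat n G"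
  shows "\<forall>r\<in>{1..n}. \<forall>s\<in>{1..n}. mmult n G (adj G) r s = idm r s"
proof -
  obtain B where B: "\<forall>r\<in>{1..n}. \<forall>s\<in>{1..n}. mmult n G B r s = idm r s"
    using ns unfolding nonsingular_mat_def by blast
  have e: "eqm n (adj G) B"
    unfolding eqm_def
  proof (intro ballI)
    fix r s assume rs: "r \<in> {1..n}" "s \<in> {1..n}"
    have "adj G r s = mmult n (adj G) (mmult n G B) r s"
      by (rule sym, rule mmult_idmR[OF B rs(2)])
    also have "\<dots> = mmult n (mmult n (adj G) G) B r s" by (simp add: mmult_assoc)
    also have "\<dots> = B r s" by (rule mmult_idmL[OF u1 rs(1)])
    finally show "adj G r s = B r s" .
  qed
  show ?thesis
  proof (intro ballI)
    fix r s assume rs: "r \<in> {1..n}" "s \<in> {1..n}"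
    have "mmult n G (adj G) r s = mmult n G B r s" by (rule mmult_congR[OF e rs(2)])
    then show "mmult n G (adj G) r s = idm r s" using B rs by simp
  qed
qed

lemma zp_seq:
  assumes h: "\<forall>l<b. eqm n (Y (Suc l)) (cj n (g l) (Y l)) \<and> Y l (fst (pl l)) (snd (pl l)) = 0
                   \<and> rot n (fst (pl l)) (snd (pl l)) (g l)"
  shows "a + d = b \<Longrightarrow> zp n (map (\<lambda>l. (pl l, g l)) [a..<b]) (Y a)"
proof (induction d arbitrary: a)
  case 0 then show ?case by simp
next
  case (Suc d)
  then have ab: "a < b" by simp
  have e: "[a..<b] = a # [Suc a..<b]" using ab by (simp add: upt_conv_Cons)
  have ha: "eqm n (Y (Suc a)) (cj n (g a) (Y a))" "Y a (fst (pl a)) (snd (pl a)) = 0"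
    using h ab by auto
  have r: "rots n (map (\<lambda>l. (pl l, g l)) [Suc a..<b])"
    unfolding rots_def using h by auto
  have "zp n (map (\<lambda>l. (pl l, g l)) [Suc a..<b]) (Y (Suc a))" using Suc.IH[of "Suc a"] Suc.prems by simp
  then have "zp n (map (\<lambda>l. (pl l, g l)) [Suc a..<b]) (cj n (g a) (Y a))"
    using zp_cong[OF r ha(1)] by simp
  then show ?case unfolding e using ha(2) by (cases "pl a") simp
qed

lemma rep_nth: "l < m * length os \<Longrightarrow> rep m os ! l = os ! (l mod length os)"
proof (induction m arbitrary: l)
  case 0 then show ?case by simp
next
  case (Suc m)
  show ?case
  proof (cases "l < length os")
    case True then show ?thesis by (simp add: rep_Suc nth_append)
  next
    case False
    then have "l - length os < m * length os" using Suc.prems by simp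
    then have "rep m os ! (l - length os) = os ! ((l - length os) mod length os)" by (rule Suc.IH)
    moreover have "(l - length os) mod length os = l mod length os" using False by (simp add: mod_if le_mod_geq)
    ultimately show ?thesis using False by (simp add: rep_Suc nth_append)
  qed
qed

lemma length_rep: "length (rep m os) = m * length os"
  by (induction m) (simp_all add: rep_Suc rep_0)




lemma sf_cong: "eqm n X Y \<Longrightarrow> sf n X = sf n Y"
  unfolding sf_def eqm_def by (intro sum.cong refl) auto

lemma off_cong: "eqm n X Y \<Longrightarrow> eqm n (off X) (off Y)"
  unfolding eqm_def off_def by auto

lemma eqm_trans: "eqm n X Y \<Longrightarrow> eqm n Y Z \<Longrightarrow> eqm n X Z" unfolding eqm_def by auto

lemma strict_mono_plus: "strict_mono K \<Longrightarrow> strict_mono (\<lambda>m. K m + (l::nat))"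
  unfolding strict_mono_def by auto

lemma lim_unique_const: "(\<lambda>m. c) \<longlonglongrightarrow> a \<Longrightarrow> a = (c::complex)"
  using LIMSEQ_unique tendsto_const by blast

lemma window:
  fixes n N m P :: nat and os :: "(nat \<times> nat) list" and H F U :: "nat \<Rightarrow> cmat" and K :: "nat \<Rightarrow> nat"
  assumes N: "N = length os" "0 < N"
    and osp: "\<forall>l<N. os ! l \<in> pairs n"
    and g: "good n (rep m os)"
    and herm: "\<forall>k. hermitian_mat n (H k)"
    and stepH: "\<forall>k. eqm n (H (Suc k)) (cj n (F k) (H k))"
    and FU: "\<forall>r\<in>{1..n}. \<forall>s\<in>{1..n}. (\<lambda>k. F k r s - U k r s) \<longlonglongrightarrow> 0"
    and U1: "\<forall>k. \<forall>r\<in>{1..n}. \<forall>s\<in>{1..n}. mmult n (adj (U k)) (U k) r s = idm r s"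
    and U2: "\<forall>k. \<forall>r\<in>{1..n}. \<forall>s\<in>{1..n}. mmult n (U k) (adj (U k)) r s = idm r s"
    and Fpl: "\<forall>k. inpl n (fst (os ! (k mod N))) (snd (os ! (k mod N))) (F k)"
    and c: "0 < c" "eventually (\<lambda>k. c \<le> cmod (F k (fst (os ! (k mod N))) (fst (os ! (k mod N))))) sequentially"
    and piv: "(\<lambda>k. cmod (H (Suc k) (fst (os ! (k mod N))) (snd (os ! (k mod N))))) \<longlonglongrightarrow> 0"
    and K: "strict_mono K" "\<forall>j. K j mod N = 0"
    and WP: "m * N \<le> P"
    and cH: "\<forall>l\<le>P. \<forall>r\<in>{1..n}. \<forall>s\<in>{1..n}. convergent (\<lambda>j. H (K j + l) r s)"
    and cF: "\<forall>l\<le>P. \<forall>r\<in>{1..n}. \<forall>s\<in>{1..n}. convergent (\<lambda>j. F (K j + l) r s)"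
    and y0: "(\<lambda>j. sf n (H (K j))) \<longlonglongrightarrow> y0" and yP: "(\<lambda>j. sf n (H (K j + P))) \<longlonglongrightarrow> yP"
    and le: "y0 \<le> yP"
  shows "yP \<le> 0"
proof -
  define X where "X l r s = lim (\<lambda>j. H (K j + l) r s)" for l r s
  define G where "G l r s = lim (\<lambda>j. F (K j + l) r s)" for l r s
  define p where "p l = fst (os ! (l mod N))" for l
  define q where "q l = snd (os ! (l mod N))" for l
  have HX: "(\<lambda>j. H (K j + l) r s) \<longlonglongrightarrow> X l r s" if "l \<le> P" "r \<in> {1..n}" "s \<in> {1..n}" for l r s
    using cH that unfolding X_def by (simp add: convergent_LIMSEQ_iff)
  have FG: "(\<lambda>j. F (K j + l) r s) \<longlonglongrightarrow> G l r s" if "l \<le> P" "r \<in> {1..n}" "s \<in> {1..n}" for l r s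
    using cF that unfolding G_def by (simp add: convergent_LIMSEQ_iff)
  have Kl: "strict_mono (\<lambda>j. K j + l)" for l by (rule strict_mono_plus[OF K(1)])
  have Kmod: "(K j + l) mod N = l mod N" for j l
    using K(2) by (metis add_0 mod_add_left_eq)
  have pq: "1 \<le> p l \<and> p l < q l \<and> q l \<le> n" for l
    using osp N(2) unfolding p_def q_def pairs_def by (auto simp: case_prod_beta)
  have UG: "(\<lambda>j. U (K j + l) r s) \<longlonglongrightarrow> G l r s" if "l \<le> P" "r \<in> {1..n}" "s \<in> {1..n}" for l r s
  proof -
    have "((\<lambda>k. F k r s - U k r s) \<circ> (\<lambda>j. K j + l)) \<longlonglongrightarrow> 0"
      using FU that by (intro LIMSEQ_subseq_LIMSEQ[OF _ Kl]) auto
    then have "(\<lambda>j. F (K j + l) r s - (F (K j + l) r s - U (K j + l) r s)) \<longlonglongrightarrow> G l r s - 0"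
      by (intro tendsto_diff FG[OF that]) (simp add: comp_def)
    then show ?thesis by simp
  qed
  have rotG: "rot n (p l) (q l) (G l)" if l: "l < P" for l
  proof -
    have lP: "l \<le> P" using l by simp
    have u1: "\<forall>r\<in>{1..n}. \<forall>s\<in>{1..n}. mmult n (adj (G l)) (G l) r s = idm r s"
    proof (intro ballI)
      fix r s assume rs: "r \<in> {1..n}" "s \<in> {1..n}"
      have "(\<lambda>j. mmult n (adj (U (K j + l))) (U (K j + l)) r s) \<longlonglongrightarrow> mmult n (adj (G l)) (G l) r s"
        unfolding adj_def using UG[OF lP] rs by (intro tendsto_mmult) (auto intro: tendsto_cnj)
      moreover have "(\<lambda>j. mmult n (adj (U (K j + l))) (U (K j + l)) r s) = (\<lambda>j. idm r s)"
        using U1 rs by auto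
      ultimately show "mmult n (adj (G l)) (G l) r s = idm r s" using lim_unique_const by metis
    qed
    have u2: "\<forall>r\<in>{1..n}. \<forall>s\<in>{1..n}. mmult n (G l) (adj (G l)) r s = idm r s"
    proof (intro ballI)
      fix r s assume rs: "r \<in> {1..n}" "s \<in> {1..n}"
      have "(\<lambda>j. mmult n (U (K j + l)) (adj (U (K j + l))) r s) \<longlonglongrightarrow> mmult n (G l) (adj (G l)) r s"
        unfolding adj_def using UG[OF lP] rs by (intro tendsto_mmult) (auto intro: tendsto_cnj)
      moreover have "(\<lambda>j. mmult n (U (K j + l)) (adj (U (K j + l))) r s) = (\<lambda>j. idm r s)"
        using U2 rs by auto
      ultimately show "mmult n (G l) (adj (G l)) r s = idm r s" using lim_unique_const by metis
    qed
    have ip: "inpl n (p l) (q l) (G l)"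
      unfolding inpl_def
    proof (intro ballI impI)
      fix r s assume rs: "r \<in> {1..n}" "s \<in> {1..n}" and o: "r \<notin> {p l, q l} \<or> s \<notin> {p l, q l}"
      have "(\<lambda>j. F (K j + l) r s) = (\<lambda>j. idm r s)"
        using Fpl rs o Kmod unfolding inpl_def p_def q_def by auto
      then show "G l r s = idm r s" using FG[OF lP rs] lim_unique_const by metis
    qed
    have "eventually (\<lambda>j. c \<le> cmod (F (K j + l) (p l) (p l))) sequentially"
    proof -
      have "filterlim (\<lambda>j. K j + l) sequentially sequentially" by (rule filterlim_subseq[OF Kl])
      then have "eventually (\<lambda>j. c \<le> cmod (F (K j + l) (fst (os ! ((K j + l) mod N))) (fst (os ! ((K j + l) mod N))))) sequentially"
        using eventually_compose_filterlim[OF c(2)] by blast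
      then show ?thesis unfolding Kmod p_def .
    qed
    moreover have "(\<lambda>j. cmod (F (K j + l) (p l) (p l))) \<longlonglongrightarrow> cmod (G l (p l) (p l))"
      using FG[OF lP] pq[of l] by (intro tendsto_norm) auto
    ultimately have "c \<le> cmod (G l (p l) (p l))" by (intro tendsto_lowerbound) auto
    then have d1: "G l (p l) (p l) \<noteq> 0" using c(1) by auto
    have d2: "G l (q l) (q l) \<noteq> 0"
      by (rule rot_qq[OF u1 u2 ip _ _ _ d1]) (use pq[of l] in auto)
    show ?thesis unfolding rot_def using pq[of l] u1 u2 ip d1 d2 by auto
  qed
  have stepX: "eqm n (X (Suc l)) (cj n (G l) (X l))" if l: "l < P" for l
    unfolding eqm_def
  proof (intro ballI)
    fix r s assume rs: "r \<in> {1..n}" "s \<in> {1..n}"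
    have "(\<lambda>j. cj n (F (K j + l)) (H (K j + l)) r s) \<longlonglongrightarrow> cj n (G l) (X l) r s"
      using FG HX l rs by (intro tendsto_cj) auto
    moreover have "(\<lambda>j. cj n (F (K j + l)) (H (K j + l)) r s) = (\<lambda>j. H (K j + Suc l) r s)"
      using stepH rs unfolding eqm_def by auto
    ultimately show "X (Suc l) r s = cj n (G l) (X l) r s"
      using HX[of "Suc l" r s] l rs LIMSEQ_unique by fastforce
  qed
  have hermX: "hermitian_mat n (X l)" if l: "l \<le> P" for l
    unfolding hermitian_mat_def
  proof (intro ballI)
    fix r s assume rs: "r \<in> {1..n}" "s \<in> {1..n}"
    have "(\<lambda>j. cnj (H (K j + l) s r)) \<longlonglongrightarrow> cnj (X l s r)" using HX[OF l rs(2,1)] by (rule tendsto_cnj)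
    moreover have "(\<lambda>j. cnj (H (K j + l) s r)) = (\<lambda>j. H (K j + l) r s)"
      using herm rs unfolding hermitian_mat_def by metis
    ultimately show "X l r s = cnj (X l s r)" using HX[OF l rs] LIMSEQ_unique by fastforce
  qed
  have pivX: "X (Suc l) (p l) (q l) = 0" if l: "l < P" for l
  proof -
    have "((\<lambda>k. cmod (H (Suc k) (fst (os ! (k mod N))) (snd (os ! (k mod N))))) \<circ> (\<lambda>j. K j + l)) \<longlonglongrightarrow> 0"
      by (rule LIMSEQ_subseq_LIMSEQ[OF piv Kl])
    then have "(\<lambda>j. cmod (H (K j + Suc l) (p l) (q l))) \<longlonglongrightarrow> 0"
      by (simp add: comp_def Kmod p_def q_def)
    then have "(\<lambda>j. H (K j + Suc l) (p l) (q l)) \<longlonglongrightarrow> 0" by (simp add: tendsto_norm_zero_iff)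
    then show ?thesis using HX[of "Suc l" "p l" "q l"] l pq[of l] LIMSEQ_unique by fastforce
  qed
  have sfX: "(\<lambda>j. sf n (H (K j + l))) \<longlonglongrightarrow> sf n (X l)" if "l \<le> P" for l
    using HX that by (intro tendsto_sf) auto
  have sP: "sf n (X P) = yP" using sfX[of P] yP LIMSEQ_unique by auto
  have s0: "sf n (X 0) = y0" using sfX[of 0] y0 LIMSEQ_unique by auto
  have rec: "sf n (X (Suc l)) = sf n (X l) - 2 * (cmod (X l (p l) (q l)))\<^sup>2" if l: "l < P" for l
  proof -
    have "sf n (X (Suc l)) = sf n (cj n (G l) (X l))" by (rule sf_cong[OF stepX[OF l]])
    also have "\<dots> = sf n (X l) - 2 * (cmod (X l (p l) (q l)))\<^sup>2 + 2 * (cmod (cj n (G l) (X l) (p l) (q l)))\<^sup>2"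
      by (rule sf_step[OF rotG[OF l] hermX]) (use l in simp)
    also have "cj n (G l) (X l) (p l) (q l) = 0"
      using stepX[OF l] pivX[OF l] pq[of l] unfolding eqm_def by auto
    finally show ?thesis by simp
  qed
  have tel: "l \<le> P \<Longrightarrow> sf n (X l) + 2 * (\<Sum>l'<l. (cmod (X l' (p l') (q l')))\<^sup>2) = sf n (X 0)" for l
  proof (induction l)
    case 0 then show ?case by simp
  next
    case (Suc l)
    then show ?case using rec[of l] by simp
  qed
  have "2 * (\<Sum>l'<P. (cmod (X l' (p l') (q l')))\<^sup>2) \<le> 0"
    using tel[of P] sP s0 le by simp
  then have "(\<Sum>l'<P. (cmod (X l' (p l') (q l')))\<^sup>2) = 0"
    by (simp add: sum_nonneg order_antisym)
  then have pz: "X l (p l) (q l) = 0" if "l < P" for l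
    using that by (simp add: sum_nonneg_eq_0_iff)
  define Ob where "Ob l = off (X l)" for l
  have stepO: "eqm n (Ob (Suc l)) (cj n (G l) (Ob l))" if l: "l < P" for l
  proof -
    have "eqm n (Ob (Suc l)) (off (cj n (G l) (X l)))" unfolding Ob_def by (rule off_cong[OF stepX[OF l]])
    moreover have "eqm n (off (cj n (G l) (X l))) (cj n (G l) (Ob l))" unfolding Ob_def
      using stepX[OF l] pivX[OF l] pq[of l] unfolding eqm_def
      by (intro off_step[OF rotG[OF l] hermX pz[OF l], unfolded eqm_def]) (use l in auto)
    ultimately show ?thesis by (rule eqm_trans)
  qed
  have hyp: "\<forall>l<m * N. eqm n (Ob (Suc l)) (cj n (G l) (Ob l)) \<and> Ob l (fst (os ! (l mod N))) (snd (os ! (l mod N))) = 0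
                   \<and> rot n (fst (os ! (l mod N))) (snd (os ! (l mod N))) (G l)"
  proof (intro allI impI conjI)
    fix l assume l: "l < m * N"
    then have lP: "l < P" using WP by simp
    show "eqm n (Ob (Suc l)) (cj n (G l) (Ob l))" by (rule stepO[OF lP])
    show "Ob l (fst (os ! (l mod N))) (snd (os ! (l mod N))) = 0"
      using pz[OF lP] pq[of l] unfolding Ob_def off_def p_def q_def by simp
    show "rot n (fst (os ! (l mod N))) (snd (os ! (l mod N))) (G l)"
      using rotG[OF lP] unfolding p_def q_def .
  qed
  have zz: "zp n (map (\<lambda>l. (os ! (l mod N), G l)) [0..<m * N]) (Ob 0)"
    using zp_seq[OF hyp, of 0 "m * N"] by simp
  have mf: "map fst (map (\<lambda>l. (os ! (l mod N), G l)) [0..<m * N]) = rep m os"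
    by (rule nth_equalityI) (simp_all add: length_rep N(1) rep_nth)
  have rr: "rots n (map (\<lambda>l. (os ! (l mod N), G l)) [0..<m * N])"
    unfolding rots_def using hyp by auto
  have "zero_mat n (Ob 0)"
    using g mf rr zz off_herm[OF hermX[of 0]] off_zdiag unfolding good_def Ob_def by blast
  then have "sf n (X 0) = 0" using zero_sf sf_off unfolding Ob_def by metis
  moreover have "0 \<le> (\<Sum>l'<P. (cmod (X l' (p l') (q l')))\<^sup>2)" by (rule sum_nonneg) simp
  ultimately show ?thesis using tel[of P] sP by linarith
qed




lemma modz: assumes "0 < (N::nat)" "t < N" "(x + t) mod N = t" shows "x mod N = 0"
proof -
  have e: "(x mod N + t) mod N = t" using assms(3) by (simp add: mod_add_left_eq)
  have a: "x mod N < N" using assms(1) by simp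
  show ?thesis
  proof (cases "x mod N + t < N")
    case True then show ?thesis using e by simp
  next
    case False
    then have "(x mod N + t) mod N = (x mod N + t - N) mod N" by (simp add: le_mod_geq)
    also have "\<dots> = x mod N + t - N"
    proof -
      have "x mod N + t - N < N" using a assms(2) by linarith
      then show ?thesis by simp
    qed
    finally show ?thesis using e False a by linarith
  qed
qed

lemma main_conv:
  fixes n N m :: nat and os :: "(nat \<times> nat) list" and H F U :: "nat \<Rightarrow> cmat"
  assumes N: "N = length os" "0 < N"
    and osp: "\<forall>l<N. os ! l \<in> pairs n"
    and g: "good n (rep m os)"
    and herm: "\<forall>k. hermitian_mat n (H k)"
    and stepH: "\<forall>k. eqm n (H (Suc k)) (cj n (F k) (H k))"
    and FU: "\<forall>r\<in>{1..n}. \<forall>s\<in>{1..n}. (\<lambda>k. F k r s - U k r s) \<longlonglongrightarrow> 0"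
    and U1: "\<forall>k. \<forall>r\<in>{1..n}. \<forall>s\<in>{1..n}. mmult n (adj (U k)) (U k) r s = idm r s"
    and U2: "\<forall>k. \<forall>r\<in>{1..n}. \<forall>s\<in>{1..n}. mmult n (U k) (adj (U k)) r s = idm r s"
    and Fpl: "\<forall>k. inpl n (fst (os ! (k mod N))) (snd (os ! (k mod N))) (F k)"
    and c: "0 < c" "eventually (\<lambda>k. c \<le> cmod (F k (fst (os ! (k mod N))) (fst (os ! (k mod N))))) sequentially"
    and piv: "(\<lambda>k. cmod (H (Suc k) (fst (os ! (k mod N))) (snd (os ! (k mod N))))) \<longlonglongrightarrow> 0"
    and bnd: "\<forall>k. \<forall>r\<in>{1..n}. \<forall>s\<in>{1..n}. cmod (H k r s) \<le> B"
  shows "(\<lambda>k. sf n (H k)) \<longlonglongrightarrow> 0"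
proof -
  define s where "s k = sf n (H k)" for k
  define Bs where "Bs = (\<Sum>r\<in>{1..n}. \<Sum>s\<in>{1..n}. B\<^sup>2)"
  have s0: "0 \<le> s k" for k unfolding s_def by (rule sf_nonneg)
  have sB: "s k \<le> Bs" for k
    unfolding s_def sf_def Bs_def
  proof (intro sum_mono)
    fix r t assume rt: "r \<in> {1..n}" "t \<in> {1..n}"
    have "(cmod (H k r t))\<^sup>2 \<le> B\<^sup>2" using bnd rt by (intro power_mono) auto
    then show "(if r = t then 0 else (cmod (H k r t))\<^sup>2) \<le> B\<^sup>2" by simp
  qed
  define A where "A = limsup (\<lambda>k. ereal (s k))"
  obtain \<sigma>0 :: "nat \<Rightarrow> nat" where \<sigma>0: "strict_mono \<sigma>0" "((\<lambda>k. ereal (s k)) \<circ> \<sigma>0) \<longlonglongrightarrow> A"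
    unfolding A_def using limsup_subseq_lim by blast
  have "0 \<le> A" using \<sigma>0(2) s0 by (intro tendsto_lowerbound) (auto simp: comp_def)
  moreover have "A \<le> ereal Bs" using \<sigma>0(2) sB by (intro tendsto_upperbound) (auto simp: comp_def)
  ultimately obtain A0 where A0: "A = ereal A0" by (cases A) auto
  have sconv: "(\<lambda>j. s (\<sigma>0 j)) \<longlonglongrightarrow> A0" using \<sigma>0(2) unfolding A0 comp_def lim_ereal .
  have ev: "eventually (\<lambda>k. s k < A0 + e) sequentially" if e: "0 < e" for e
  proof -
    have "Limsup sequentially (\<lambda>k. ereal (s k)) < ereal (A0 + e)" using e unfolding A_def[symmetric] A0 by simp
    from Limsup_lessD[OF this] show ?thesis by simp
  qed
  have upper: "y \<le> A0" if t: "(\<lambda>j. s (\<tau> j)) \<longlonglongrightarrow> y" "strict_mono \<tau>" for y \<tau>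
  proof (rule field_le_epsilon)
    fix e :: real assume e: "0 < e"
    have "eventually (\<lambda>j. s (\<tau> j) < A0 + e) sequentially"
      using eventually_compose_filterlim[OF ev[OF e] filterlim_subseq[OF t(2)]] .
    then show "y \<le> A0 + e" using t(1) by (intro tendsto_upperbound) (auto elim: eventually_mono)
  qed
  define W where "W = m * N"
  define \<sigma>1 where "\<sigma>1 j = \<sigma>0 (j + (W + N))" for j
  have \<sigma>1: "strict_mono \<sigma>1" using \<sigma>0(1) unfolding \<sigma>1_def strict_mono_def by auto
  have s1: "(\<lambda>j. s (\<sigma>1 j)) \<longlonglongrightarrow> A0"
    unfolding \<sigma>1_def using LIMSEQ_ignore_initial_segment[OF sconv, of "W + N"] .
  have g1: "W + N \<le> \<sigma>1 j" for j unfolding \<sigma>1_def using seq_suble[OF \<sigma>0(1), of "j + (W + N)"] by simp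
  obtain t and \<rho> :: "nat \<Rightarrow> nat" where t: "t < N" "strict_mono \<rho>" "\<forall>j. \<sigma>1 (\<rho> j) mod N = t"
    using pigeon[OF N(2), of \<sigma>1] by blast
  define \<sigma>2 where "\<sigma>2 = \<sigma>1 \<circ> \<rho>"
  have \<sigma>2: "strict_mono \<sigma>2" unfolding \<sigma>2_def using \<sigma>1 t(2) by (simp add: strict_mono_o)
  have s2: "(\<lambda>j. s (\<sigma>2 j)) \<longlonglongrightarrow> A0"
    using LIMSEQ_subseq_LIMSEQ[OF s1 t(2)] unfolding \<sigma>2_def by (simp add: comp_def)
  define P where "P = W + t"
  define K where "K j = \<sigma>2 j - P" for j
  have PS: "P \<le> \<sigma>2 j" for j using g1[of "\<rho> j"] t(1) unfolding \<sigma>2_def P_def by simp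
  have KP: "K j + P = \<sigma>2 j" for j unfolding K_def using PS[of j] by simp
  have Ks: "strict_mono K" unfolding strict_mono_def
  proof (intro allI impI)
    fix a b :: nat assume "a < b"
    then have "\<sigma>2 a < \<sigma>2 b" using \<sigma>2 unfolding strict_mono_def by blast
    then show "K a < K b" using PS[of a] PS[of b] unfolding K_def by linarith
  qed
  have Kmod: "K j mod N = 0" for j
  proof -
    have "\<sigma>2 j mod N = t" using t(3) unfolding \<sigma>2_def by simp
    then have "(K j + t + m * N) mod N = t" using KP[of j] unfolding P_def W_def by (simp add: add.assoc add.commute add.left_commute)
    then have "(K j + t) mod N = t" by (simp add: mod_mult_self1)
    then show ?thesis by (rule modz[OF N(2) t(1)])
  qed
  have Fb: "\<exists>BB. \<forall>k. cmod (F k r s) \<le> BB" if rs: "r \<in> {1..n}" "s \<in> {1..n}" for r s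
  proof -
    have "(\<lambda>k. F k r s - U k r s) \<longlonglongrightarrow> 0" using FU rs by blast
    then have "convergent (\<lambda>k. F k r s - U k r s)" unfolding convergent_def by blast
    then have "Bseq (\<lambda>k. F k r s - U k r s)" by (rule convergent_imp_Bseq)
    then obtain BB where BB: "\<forall>k. cmod (F k r s - U k r s) \<le> BB" by (auto elim: BseqE)
    have "cmod (F k r s) \<le> BB + 1" for k
    proof -
      have uk: "\<forall>r\<in>{1..n}. \<forall>s\<in>{1..n}. mmult n (adj (U k)) (U k) r s = idm r s" using U1 by blast
      have "cmod (F k r s) = cmod ((F k r s - U k r s) + U k r s)" by simp
      also have "\<dots> \<le> cmod (F k r s - U k r s) + cmod (U k r s)" by (rule norm_triangle_ineq)
      also have "\<dots> \<le> BB + 1" using BB unitary_bound[OF uk rs] by (intro add_mono) auto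
      finally show ?thesis .
    qed
    then show ?thesis by blast
  qed
  define I where "I = {..P} \<times> {1..n} \<times> {1..n} \<times> (UNIV :: bool set)"
  define f where "f = (\<lambda>(l,r,s',b) j. if b then H (K j + l) r s' else F (K j + l) r s')"
  have finI: "finite I" unfolding I_def by simp
  have bI: "\<forall>i\<in>I. \<exists>BB. \<forall>j. cmod (f i j) \<le> BB"
  proof
    fix i assume i: "i \<in> I"
    obtain l r s' b where iv: "i = (l,r,s',b)" by (metis prod.collapse)
    have rs: "r \<in> {1..n}" "s' \<in> {1..n}" using i iv unfolding I_def by auto
    show "\<exists>BB. \<forall>j. cmod (f i j) \<le> BB"
    proof (cases b)
      case True
      have "\<forall>j. cmod (H (K j + l) r s') \<le> B" using bnd rs by blast
      then show ?thesis using True unfolding f_def iv by auto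
    next
      case False
      obtain BB where "\<forall>k. cmod (F k r s') \<le> BB" using Fb[OF rs] by blast
      then show ?thesis using False unfolding f_def iv by auto
    qed
  qed
  obtain \<rho>2 :: "nat \<Rightarrow> nat" where r2: "strict_mono \<rho>2" "\<forall>i\<in>I. convergent (\<lambda>j. f i (\<rho>2 j))"
    using bw_fin[OF finI bI] by blast
  define K' where "K' = K \<circ> \<rho>2"
  have K's: "strict_mono K'" unfolding K'_def using Ks r2(1) by (simp add: strict_mono_o)
  have K'mod: "\<forall>j. K' j mod N = 0" unfolding K'_def using Kmod by simp
  have cH: "\<forall>l\<le>P. \<forall>r\<in>{1..n}. \<forall>s\<in>{1..n}. convergent (\<lambda>j. H (K' j + l) r s)"
  proof (intro allI impI ballI)
    fix l r s' assume "l \<le> P" "r \<in> {1..n}" "s' \<in> {1..n}"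
    then have "(l,r,s',True) \<in> I" unfolding I_def by auto
    then show "convergent (\<lambda>j. H (K' j + l) r s')" using r2(2) unfolding f_def K'_def by fastforce
  qed
  have cF: "\<forall>l\<le>P. \<forall>r\<in>{1..n}. \<forall>s\<in>{1..n}. convergent (\<lambda>j. F (K' j + l) r s)"
  proof (intro allI impI ballI)
    fix l r s' assume "l \<le> P" "r \<in> {1..n}" "s' \<in> {1..n}"
    then have "(l,r,s',False) \<in> I" unfolding I_def by auto
    then show "convergent (\<lambda>j. F (K' j + l) r s')" using r2(2) unfolding f_def K'_def by fastforce
  qed
  define X0 where "X0 r s = lim (\<lambda>j. H (K' j) r s)" for r s
  have y0: "(\<lambda>j. sf n (H (K' j))) \<longlonglongrightarrow> sf n X0"
  proof (rule tendsto_sf, intro ballI)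
    fix r s' assume rs: "r \<in> {1..n}" "s' \<in> {1..n}"
    have "convergent (\<lambda>j. H (K' j + 0) r s')" using cH rs by blast
    then show "(\<lambda>j. H (K' j) r s') \<longlonglongrightarrow> X0 r s'" unfolding X0_def by (simp add: convergent_LIMSEQ_iff)
  qed
  have yP: "(\<lambda>j. sf n (H (K' j + P))) \<longlonglongrightarrow> A0"
    using LIMSEQ_subseq_LIMSEQ[OF s2 r2(1)] unfolding K'_def comp_def KP s_def .
  have le: "sf n X0 \<le> A0" by (rule upper[OF _ K's]) (use y0 in \<open>simp add: s_def\<close>)
  have WP: "m * N \<le> P" unfolding P_def W_def by simp
  have A0le: "A0 \<le> 0"
    by (rule window[OF N osp g herm stepH FU U1 U2 Fpl c piv K's K'mod WP cH cF y0 yP le])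
  show ?thesis
  proof (rule order_tendstoI)
    fix a :: real assume "a < 0"
    then show "eventually (\<lambda>k. a < sf n (H k)) sequentially" using sf_nonneg by (auto intro: always_eventually less_le_trans)
  next
    fix a :: real assume a: "0 < a"
    show "eventually (\<lambda>k. sf n (H k) < a) sequentially"
      using ev[OF a] A0le unfolding s_def by (auto elim: eventually_mono)
  qed
qed




lemma entry_le_sf:
  assumes rs: "r \<in> {1..n}" "s \<in> {1..n}" "r \<noteq> s"
  shows "(cmod (X r s))\<^sup>2 \<le> sf n X"
proof -
  have "(cmod (X r s))\<^sup>2 = (if r = s then 0 else (cmod (X r s))\<^sup>2)" using rs by simp
  also have "\<dots> \<le> (\<Sum>s'\<in>{1..n}. if r = s' then 0 else (cmod (X r s'))\<^sup>2)"
    by (rule member_le_sum[OF rs(2)]) auto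
  also have "\<dots> \<le> sf n X" unfolding sf_def
    by (rule member_le_sum[OF rs(1)]) (auto intro!: sum_nonneg)
  finally show ?thesis .
qed

lemma herm_eqm: assumes "eqm n X Y" "hermitian_mat n Y" shows "hermitian_mat n X"
  unfolding hermitian_mat_def
proof (intro ballI)
  fix r s assume rs: "r \<in> {1..n}" "s \<in> {1..n}"
  have "Y r s = cnj (Y s r)" using assms(2) rs unfolding hermitian_mat_def by blast
  moreover have "X r s = Y r s" "X s r = Y s r" using assms(1) rs unfolding eqm_def by auto
  ultimately show "X r s = cnj (X s r)" by simp
qed

theorem theorem3p8:
  fixes n :: nat and H :: "nat \<Rightarrow> cmat" and F :: "nat \<Rightarrow> cmat"
    and i j :: "nat \<Rightarrow> nat"
  assumes n2: "n \<ge> 2"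
    and herm: "hermitian_mat n (H 0)"
    and nonzero: "\<not> zero_mat n (H 0)"
    and step: "\<And>k. \<forall>r\<in>{1..n}. \<forall>s\<in>{1..n}.
                  H (Suc k) r s = mmult n (mmult n (adj (F k)) (H k)) (F k) r s"
    and plane: "\<And>k. elem_plane n (i k) (j k) (F k)"
    and A1: "\<exists>os\<in>gen_serial n. \<forall>k. (i k, j k) = cyclic_strategy os k"
    and A2: "\<exists>U. (\<forall>k. unitary_mat n (U k) \<and> elem_plane_any n (U k)) \<and>
               (\<forall>r\<in>{1..n}. \<forall>s\<in>{1..n}. (\<lambda>k. F k r s - U k r s) \<longlonglongrightarrow> 0)"
    and A3: "liminf (\<lambda>k. ereal (cmod (F k (i k) (i k)))) > 0"
    and A4: "\<exists>B. \<forall>k. \<forall>r\<in>{1..n}. \<forall>s\<in>{1..n}. cmod (H k r s) \<le> B"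
  shows "((\<lambda>k. cmod (H (Suc k) (i k) (j k))) \<longlonglongrightarrow> 0) \<longleftrightarrow>
         ((\<lambda>k. off_norm n (H k)) \<longlonglongrightarrow> 0)"
proof -
  obtain os where os: "os \<in> gen_serial n" "\<forall>k. (i k, j k) = cyclic_strategy os k" using A1 by blast
  have ord: "distinct os" "set os = pairs n" using os(1) unfolding gen_serial_def is_ordering_def by auto
  define N where "N = length os"
  have "(1,2) \<in> pairs n" using n2 unfolding pairs_def by auto
  then have N0: "0 < N" using ord(2) unfolding N_def by (cases os) auto
  have ij: "i k = fst (os ! (k mod N))" "j k = snd (os ! (k mod N))" for k
    using os(2) unfolding cyclic_strategy_def N_def by (metis fst_conv snd_conv)+
  have osp: "\<forall>l<N. os ! l \<in> pairs n" using ord(2) unfolding N_def by (metis nth_mem)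
  have "Pg n os" by (rule gen_serial_Pg) (use n2 os(1) in auto)
  then obtain m where g: "good n (rep m os)" unfolding Pg_def by blast
  have stepH: "\<forall>k. eqm n (H (Suc k)) (cj n (F k) (H k))" using step unfolding eqm_def cj_def by blast
  have hermH: "\<forall>k. hermitian_mat n (H k)"
  proof
    fix k show "hermitian_mat n (H k)"
    proof (induction k)
      case 0 then show ?case by (rule herm)
    next
      case (Suc k) then show ?case using herm_eqm stepH cj_herm by blast
    qed
  qed
  obtain U where U: "\<forall>k. unitary_mat n (U k) \<and> elem_plane_any n (U k)"
    "\<forall>r\<in>{1..n}. \<forall>s\<in>{1..n}. (\<lambda>k. F k r s - U k r s) \<longlonglongrightarrow> 0" using A2 by blast
  have U1: "\<forall>k. \<forall>r\<in>{1..n}. \<forall>s\<in>{1..n}. mmult n (adj (U k)) (U k) r s = idm r s"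
    using U(1) unfolding unitary_mat_def by blast
  have U2: "\<forall>k. \<forall>r\<in>{1..n}. \<forall>s\<in>{1..n}. mmult n (U k) (adj (U k)) r s = idm r s"
  proof
    fix k
    have "nonsingular_mat n (U k)" using U(1) unfolding elem_plane_any_def elem_plane_def by blast
    moreover have "\<forall>r\<in>{1..n}. \<forall>s\<in>{1..n}. mmult n (adj (U k)) (U k) r s = idm r s" using U1 by blast
    ultimately show "\<forall>r\<in>{1..n}. \<forall>s\<in>{1..n}. mmult n (U k) (adj (U k)) r s = idm r s"
      using unitary_right by blast
  qed
  have Fpl: "\<forall>k. inpl n (fst (os ! (k mod N))) (snd (os ! (k mod N))) (F k)"
    using plane unfolding elem_plane_def inpl_def ij by blast
  obtain c where c: "0 < ereal c" "ereal c < liminf (\<lambda>k. ereal (cmod (F k (i k) (i k))))"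
    using ereal_dense2[OF A3] by blast
  have c1: "0 < c" using c(1) by simp
  have c2: "eventually (\<lambda>k. c \<le> cmod (F k (fst (os ! (k mod N))) (fst (os ! (k mod N))))) sequentially"
    using less_LiminfD[OF c(2)] unfolding ij[symmetric] by (auto elim: eventually_mono)
  obtain B where B: "\<forall>k. \<forall>r\<in>{1..n}. \<forall>s\<in>{1..n}. cmod (H k r s) \<le> B" using A4 by blast
  show ?thesis
  proof
    assume piv0: "(\<lambda>k. cmod (H (Suc k) (i k) (j k))) \<longlonglongrightarrow> 0"
    have piv: "(\<lambda>k. cmod (H (Suc k) (fst (os ! (k mod N))) (snd (os ! (k mod N))))) \<longlonglongrightarrow> 0"
      using piv0 unfolding ij .
    have "(\<lambda>k. sf n (H k)) \<longlonglongrightarrow> 0"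
      by (rule main_conv[OF N_def N0 osp g hermH stepH U(2) U1 U2 Fpl c1 c2 piv B])
    then have "(\<lambda>k. sqrt (sf n (H k))) \<longlonglongrightarrow> sqrt 0" by (rule tendsto_real_sqrt)
    then show "(\<lambda>k. off_norm n (H k)) \<longlonglongrightarrow> 0" unfolding off_norm_sf by simp
  next
    assume o: "(\<lambda>k. off_norm n (H k)) \<longlonglongrightarrow> 0"
    have o': "(\<lambda>k. off_norm n (H (Suc k))) \<longlonglongrightarrow> 0" using LIMSEQ_Suc[OF o] .
    have ev: "\<forall>k. norm (cmod (H (Suc k) (i k) (j k))) \<le> off_norm n (H (Suc k))"
    proof
      fix k
      have r: "i k \<in> {1..n}" "j k \<in> {1..n}" "i k \<noteq> j k" using plane[of k] unfolding elem_plane_def by auto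
      have "(cmod (H (Suc k) (i k) (j k)))\<^sup>2 \<le> sf n (H (Suc k))" by (rule entry_le_sf[OF r])
      then have "cmod (H (Suc k) (i k) (j k)) \<le> sqrt (sf n (H (Suc k)))" by (rule real_le_rsqrt)
      then show "norm (cmod (H (Suc k) (i k) (j k))) \<le> off_norm n (H (Suc k))" unfolding off_norm_sf by simp
    qed
    show "(\<lambda>k. cmod (H (Suc k) (i k) (j k))) \<longlonglongrightarrow> 0"
      by (rule Lim_null_comparison[OF always_eventually[OF ev] o'])
  qed
qed


end
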